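(* For every extended regular nondeterministic nominal automaton (ERNNA) $A$ there exists a bar formula $\phi$ such that $[\![\phi]\!]=L_\alpha(A)$.
   Context: Names $\mathbb{A}$ (countably infinite), the group $G$ of finite permutations of $\mathbb{A}$, nominal sets (sets with $G$-action where each element has a finite support; $\mathrm{supp}(x)$ least support), orbits, orbit-finiteness, equivariance as usual. Abstraction set $[\mathbb{A}]X$: $\mathbb{A}\times X$ modulo $(a,x)\sim(b,y)$ iff $(a\,c)\cdot x=(b\,c)\cdot y$ for some $c$ outside the supports of $a,x,b,y$; class written $\langle a\rangle x$. $\overline{\mathbb{A}}=\mathbb{A}\cup\{|a\mid a\in\mathbb{A}\}$, bar strings are words over $\overline{\mathbb{A}}$ with letterwise action; $\equiv_\alpha$ is the least equivalence with $w|av\equiv_\alpha w|bu$ whenever $\langle a\rangle v=\langle b\rangle u$ in $[\mathbb{A}]\overline{\mathbb{A}}^*$. Free occurrence of plain $a$: no $|a$ to its left; $\mathrm{FN}(w)$; $[S]=\{w\mid\mathrm{FN}(w)\subseteq S\}$. Bar formulae: $\phi::=\epsilon\mid\neg\epsilon\mid\phi\wedge\phi\mid\phi\vee\phi\mid\Diamond_\sigma\phi\mid\Box_\sigma\phi\mid X\mid\mu X.\phi$ ($\sigma\in\overline{\mathbb{A}}$), with all free occurrences of $X$ in $\phi$ in the scope of a modality in $\mu X.\phi$; $\top=\epsilon\vee\neg\epsilon$. Free names $\mathrm{FN}(\phi)$: names $a$ with some $\Diamond_a/\Box_a$ outside the scope of all $\Diamond_{|a}/\Box_{|a}$. Fixpoint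 variables implicitly annotated with the free names of their binding $\mu$-expression. Semantics $S,w\models\phi$ for finite $S\supseteq\mathrm{FN}(\phi)$, $w\in[S]$: Booleans usual; $\epsilon$ iff $w$ empty; $\neg\epsilon$ iff nonempty; $\mu X.\phi$ iff $S,w\models\phi[\mu X.\phi/X]$; $\Diamond_a\phi$ iff $w=av$, $S,v\models\phi$; $\Box_a\phi$ iff ($w=av\Rightarrow S,v\models\phi$); $\Diamond_{|a}\phi$ iff exist $\psi,v,b$ with $w\equiv_\alpha|bv$, $\langle a\rangle\phi=\langle b\rangle\psi$, $S\cup\{b\},v\models\psi$; $\Box_{|a}\phi$ iff for all $\psi,v,b$ with $w\equiv_\alpha|bv$ and $\langle a\rangle\phi=\langle b\rangle\psi$, $S\cup\{b\},v\models\psi$. $[\![\phi]\!]=\{w\in[\emptyset]\mid\emptyset,w\models\phi\}/{\equiv_\alpha}$. ERNNA $A=(Q,\to,s,f)$: $Q$ orbit-finite nominal set; $s\in Q$ with $\mathrm{supp}(s)=\emptyset$; equivariant $\to\subseteq Q\times(\overline{\mathbb{A}}\cup\{\epsilon\})\times Q$; equivariant $f:Q\to\{0,1,\top\}$; $q\xrightarrow{|a}q'$ and $\langle a\rangle q'=\langle b\rangle q''$ imply $q\xrightarrow{|b}q''$; for each $q$ the sets $\{(a,q')\mid q\xrightarrow{a}q'\}$, $\{q'\mid q\xrightarrow{\epsilon}q'\}$, $\{\langle a\rangle q'\mid q\xrightarrow{|a}q'\}$ are finite; every $q$ with $f(q)=\top$ has empty support and no outgoing transitions. With $\to$ extended to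 words, $L_{pre}(A)=\{(w,f(q))\mid s\xrightarrow{w}q, f(q)\in\{1,\top\}\}$, $L_0(A)=[\emptyset]\cap(\{w\mid(w,1)\in L_{pre}(A)\}\cup\{vu\mid(v,\top)\in L_{pre}(A),u\in\overline{\mathbb{A}}^*\})$, $L_\alpha(A)=L_0(A)/{\equiv_\alpha}$. *)

theory Defs
  imports Main "HOL-Combinatorics.Perm"
begin

text \<open>Names: the countably infinite set nat. G: finite permutations of names, i.e. the type
  nat perm of HOL-Combinatorics (bijections moving only finitely many points).\<close>

type_synonym name = nat

definition supports :: "(name perm \<Rightarrow> 'x \<Rightarrow> 'x) \<Rightarrow> name set \<Rightarrow> 'x \<Rightarrow> bool" where
  "supports act S x \<longleftrightarrow> (\<forall>\<pi>. (\<forall>a\<in>S. Perm.apply \<pi> a = a) \<longrightarrow> act \<pi> x = x)"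

definition fin_supp :: "(name perm \<Rightarrow> 'x \<Rightarrow> 'x) \<Rightarrow> 'x \<Rightarrow> bool" where
  "fin_supp act x \<longleftrightarrow> (\<exists>S. finite S \<and> supports act S x)"

text \<open>Least support (for finitely supported x this is the least finite support).\<close>
definition supp :: "(name perm \<Rightarrow> 'x \<Rightarrow> 'x) \<Rightarrow> 'x \<Rightarrow> name set" where
  "supp act x = \<Inter>{S. finite S \<and> supports act S x}"

definition nominal_set :: "(name perm \<Rightarrow> 'x \<Rightarrow> 'x) \<Rightarrow> 'x set \<Rightarrow> bool" where
  "nominal_set act X \<longleftrightarrow>
     (\<forall>x\<in>X. act 1 x = x) \<and>
     (\<forall>\<pi> \<sigma>. \<forall>x\<in>X. act (\<pi> * \<sigma>) x = act \<pi> (act \<sigma> x)) \<and>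
     (\<forall>\<pi>. \<forall>x\<in>X. act \<pi> x \<in> X) \<and>
     (\<forall>x\<in>X. fin_supp act x)"

definition nom_orbit :: "(name perm \<Rightarrow> 'x \<Rightarrow> 'x) \<Rightarrow> 'x \<Rightarrow> 'x set" where
  "nom_orbit act x = range (\<lambda>\<pi>. act \<pi> x)"

definition orbit_finite :: "(name perm \<Rightarrow> 'x \<Rightarrow> 'x) \<Rightarrow> 'x set \<Rightarrow> bool" where
  "orbit_finite act X \<longleftrightarrow> finite (nom_orbit act ` X)"

text \<open>Equality of abstractions: \<langle>a\<rangle>x = \<langle>b\<rangle>y in [A]X (the support of a name a is {a}).\<close>
definition abs_eq :: "(name perm \<Rightarrow> 'x \<Rightarrow> 'x) \<Rightarrow> name \<Rightarrow> 'x \<Rightarrow> name \<Rightarrow> 'x \<Rightarrow> bool" where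
  "abs_eq act a x b y \<longleftrightarrow>
     (\<exists>c. c \<noteq> a \<and> c \<noteq> b \<and> c \<notin> supp act x \<and> c \<notin> supp act y \<and>
          act (Perm.swap a c) x = act (Perm.swap b c) y)"

text \<open>The abstraction class \<langle>a\<rangle>x, as a set of representatives in A \<times> X.\<close>
definition abs_class :: "(name perm \<Rightarrow> 'x \<Rightarrow> 'x) \<Rightarrow> 'x set \<Rightarrow> name \<Rightarrow> 'x \<Rightarrow> (name \<times> 'x) set" where
  "abs_class act X a x = {(b, y). y \<in> X \<and> abs_eq act a x b y}"

datatype bletter = Plain name | Bar name

fun perm_bl :: "name perm \<Rightarrow> bletter \<Rightarrow> bletter" where
  "perm_bl \<pi> (Plain a) = Plain (Perm.apply \<pi> a)"
| "perm_bl \<pi> (Bar a) = Bar (Perm.apply \<pi> a)"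

definition perm_bs :: "name perm \<Rightarrow> bletter list \<Rightarrow> bletter list" where
  "perm_bs \<pi> w = map (perm_bl \<pi>) w"

inductive alpha_eq :: "bletter list \<Rightarrow> bletter list \<Rightarrow> bool" where
  alpha_refl: "alpha_eq w w"
| alpha_sym: "alpha_eq w u \<Longrightarrow> alpha_eq u w"
| alpha_trans: "alpha_eq w u \<Longrightarrow> alpha_eq u v \<Longrightarrow> alpha_eq w v"
| alpha_step: "abs_eq perm_bs a v b u \<Longrightarrow> alpha_eq (w @ Bar a # v) (w @ Bar b # u)"

definition alpha_rel :: "(bletter list \<times> bletter list) set" where
  "alpha_rel = {(w, u). alpha_eq w u}"

definition FN_bs :: "bletter list \<Rightarrow> name set" where
  "FN_bs w = {a. \<exists>i < length w. w ! i = Plain a \<and> (\<forall>j < i. w ! j \<noteq> Bar a)}"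

definition closed_strings :: "name set \<Rightarrow> bletter list set" where
  "closed_strings S = {w. FN_bs w \<subseteq> S}"

text \<open>Fixpoint variables are natural numbers; each occurrence Var X A carries its annotation A,
  which in a well-formed formula is the set of free names of the binding mu-expression.\<close>
datatype form =
    Eps
  | NEps
  | Conj form form
  | Disj form form
  | Dia bletter form
  | Box bletter form
  | Var nat "name set"
  | Mu nat form

fun perm_form :: "name perm \<Rightarrow> form \<Rightarrow> form" where
  "perm_form \<pi> Eps = Eps"
| "perm_form \<pi> NEps = NEps"
| "perm_form \<pi> (Conj \<phi> \<psi>) = Conj (perm_form \<pi> \<phi>) (perm_form \<pi> \<psi>)"
| "perm_form \<pi> (Disj \<phi> \<psi>) = Disj (perm_form \<pi> \<phi>) (perm_form \<pi> \<psi>)"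
| "perm_form \<pi> (Dia \<sigma> \<phi>) = Dia (perm_bl \<pi> \<sigma>) (perm_form \<pi> \<phi>)"
| "perm_form \<pi> (Box \<sigma> \<phi>) = Box (perm_bl \<pi> \<sigma>) (perm_form \<pi> \<phi>)"
| "perm_form \<pi> (Var X A) = Var X (Perm.apply \<pi> ` A)"
| "perm_form \<pi> (Mu X \<phi>) = Mu X (perm_form \<pi> \<phi>)"

fun FN_form :: "form \<Rightarrow> name set" where
  "FN_form Eps = {}"
| "FN_form NEps = {}"
| "FN_form (Conj \<phi> \<psi>) = FN_form \<phi> \<union> FN_form \<psi>"
| "FN_form (Disj \<phi> \<psi>) = FN_form \<phi> \<union> FN_form \<psi>"
| "FN_form (Dia (Plain a) \<phi>) = insert a (FN_form \<phi>)"
| "FN_form (Dia (Bar a) \<phi>) = FN_form \<phi> - {a}"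
| "FN_form (Box (Plain a) \<phi>) = insert a (FN_form \<phi>)"
| "FN_form (Box (Bar a) \<phi>) = FN_form \<phi> - {a}"
| "FN_form (Var X A) = {}"
| "FN_form (Mu X \<phi>) = FN_form \<phi>"

fun unguarded :: "nat \<Rightarrow> form \<Rightarrow> bool" where
  "unguarded X (Conj \<phi> \<psi>) = (unguarded X \<phi> \<or> unguarded X \<psi>)"
| "unguarded X (Disj \<phi> \<psi>) = (unguarded X \<phi> \<or> unguarded X \<psi>)"
| "unguarded X (Var Y A) = (X = Y)"
| "unguarded X (Mu Y \<phi>) = (X \<noteq> Y \<and> unguarded X \<phi>)"
| "unguarded X _ = False"

fun guarded :: "form \<Rightarrow> bool" where
  "guarded (Conj \<phi> \<psi>) = (guarded \<phi> \<and> guarded \<psi>)"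
| "guarded (Disj \<phi> \<psi>) = (guarded \<phi> \<and> guarded \<psi>)"
| "guarded (Dia \<sigma> \<phi>) = guarded \<phi>"
| "guarded (Box \<sigma> \<phi>) = guarded \<phi>"
| "guarded (Mu X \<phi>) = (\<not> unguarded X \<phi> \<and> guarded \<phi>)"
| "guarded _ = True"

fun well_annotated :: "(nat \<Rightarrow> name set option) \<Rightarrow> form \<Rightarrow> bool" where
  "well_annotated \<Gamma> (Conj \<phi> \<psi>) = (well_annotated \<Gamma> \<phi> \<and> well_annotated \<Gamma> \<psi>)"
| "well_annotated \<Gamma> (Disj \<phi> \<psi>) = (well_annotated \<Gamma> \<phi> \<and> well_annotated \<Gamma> \<psi>)"
| "well_annotated \<Gamma> (Dia \<sigma> \<phi>) = well_annotated \<Gamma> \<phi>"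
| "well_annotated \<Gamma> (Box \<sigma> \<phi>) = well_annotated \<Gamma> \<phi>"
| "well_annotated \<Gamma> (Var X A) = (\<Gamma> X = Some A)"
| "well_annotated \<Gamma> (Mu X \<phi>) = well_annotated (\<Gamma>(X \<mapsto> FN_form (Mu X \<phi>))) \<phi>"
| "well_annotated \<Gamma> _ = True"

definition bar_formula :: "form \<Rightarrow> bool" where
  "bar_formula \<phi> \<longleftrightarrow> guarded \<phi> \<and> well_annotated Map.empty \<phi>"

text \<open>Substitution \<phi>[t/X] (t will always be closed, so no capture can occur).\<close>
fun subst :: "nat \<Rightarrow> form \<Rightarrow> form \<Rightarrow> form" where
  "subst X t (Conj \<phi> \<psi>) = Conj (subst X t \<phi>) (subst X t \<psi>)"
| "subst X t (Disj \<phi> \<psi>) = Disj (subst X t \<phi>) (subst X t \<psi>)"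
| "subst X t (Dia \<sigma> \<phi>) = Dia \<sigma> (subst X t \<phi>)"
| "subst X t (Box \<sigma> \<phi>) = Box \<sigma> (subst X t \<phi>)"
| "subst X t (Var Y A) = (if X = Y then t else Var Y A)"
| "subst X t (Mu Y \<phi>) = (if X = Y then Mu Y \<phi> else Mu Y (subst X t \<phi>))"
| "subst X t Eps = Eps"
| "subst X t NEps = NEps"

text \<open>Satisfaction S, w \<Turnstile> \<phi>. Defined inductively (least fixpoint); by guardedness the
  defining clauses have a unique solution, so this is the semantics of the paper.\<close>
inductive sat :: "name set \<Rightarrow> bletter list \<Rightarrow> form \<Rightarrow> bool" where
  sat_eps: "sat S [] Eps"
| sat_neps: "w \<noteq> [] \<Longrightarrow> sat S w NEps"
| sat_conj: "sat S w \<phi> \<Longrightarrow> sat S w \<psi> \<Longrightarrow> sat S w (Conj \<phi> \<psi>)"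
| sat_disj1: "sat S w \<phi> \<Longrightarrow> sat S w (Disj \<phi> \<psi>)"
| sat_disj2: "sat S w \<psi> \<Longrightarrow> sat S w (Disj \<phi> \<psi>)"
| sat_mu: "sat S w (subst X (Mu X \<phi>) \<phi>) \<Longrightarrow> sat S w (Mu X \<phi>)"
| sat_dia_plain: "sat S v \<phi> \<Longrightarrow> sat S (Plain a # v) (Dia (Plain a) \<phi>)"
| sat_box_plain: "(\<forall>v. w = Plain a # v \<longrightarrow> sat S v \<phi>) \<Longrightarrow> sat S w (Box (Plain a) \<phi>)"
| sat_dia_bar: "alpha_eq w (Bar b # v) \<Longrightarrow> abs_eq perm_form a \<phi> b \<psi> \<Longrightarrow> sat (insert b S) v \<psi>
                \<Longrightarrow> sat S w (Dia (Bar a) \<phi>)"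
| sat_box_bar: "(\<forall>\<psi> v b. alpha_eq w (Bar b # v) \<and> abs_eq perm_form a \<phi> b \<psi>
                   \<longrightarrow> sat (insert b S) v \<psi>)
                \<Longrightarrow> sat S w (Box (Bar a) \<phi>)"

definition sem :: "form \<Rightarrow> bletter list set set" where
  "sem \<phi> = {w \<in> closed_strings {}. sat {} w \<phi>} // alpha_rel"

datatype fval = F0 | F1 | FTop

text \<open>Transitions labelled by Some \<sigma> (\<sigma> a bar letter) or None (epsilon).\<close>
fun perm_lbl :: "name perm \<Rightarrow> bletter option \<Rightarrow> bletter option" where
  "perm_lbl \<pi> None = None"
| "perm_lbl \<pi> (Some \<sigma>) = Some (perm_bl \<pi> \<sigma>)"

definition ERNNA ::
  "(name perm \<Rightarrow> 'q \<Rightarrow> 'q) \<Rightarrow> 'q set \<Rightarrow> ('q \<times> bletter option \<times> 'q) set \<Rightarrow> 'q \<Rightarrow> ('q \<Rightarrow> fval) \<Rightarrow> bool"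
  where
  "ERNNA act Q T s f \<longleftrightarrow>
     nominal_set act Q \<and> orbit_finite act Q \<and>
     s \<in> Q \<and> supp act s = {} \<and>
     T \<subseteq> Q \<times> UNIV \<times> Q \<and>
     (\<forall>\<pi> q l q'. (q, l, q') \<in> T \<longrightarrow> (act \<pi> q, perm_lbl \<pi> l, act \<pi> q') \<in> T) \<and>
     (\<forall>\<pi>. \<forall>q\<in>Q. f (act \<pi> q) = f q) \<and>
     (\<forall>q a q' b q''. (q, Some (Bar a), q') \<in> T \<longrightarrow> q'' \<in> Q \<longrightarrow> abs_eq act a q' b q''
        \<longrightarrow> (q, Some (Bar b), q'') \<in> T) \<and>
     (\<forall>q\<in>Q. finite {(a, q'). (q, Some (Plain a), q') \<in> T}) \<and>
     (\<forall>q\<in>Q. finite {q'. (q, None, q') \<in> T}) \<and>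
     (\<forall>q\<in>Q. finite ((\<lambda>(a, q'). abs_class act Q a q') ` {(a, q'). (q, Some (Bar a), q') \<in> T})) \<and>
     (\<forall>q\<in>Q. f q = FTop \<longrightarrow> supp act q = {} \<and> (\<forall>l q'. (q, l, q') \<notin> T))"

inductive steps :: "('q \<times> bletter option \<times> 'q) set \<Rightarrow> 'q \<Rightarrow> bletter list \<Rightarrow> 'q \<Rightarrow> bool"
  for T where
  steps_nil: "steps T q [] q"
| steps_eps: "(q, None, q') \<in> T \<Longrightarrow> steps T q' w q'' \<Longrightarrow> steps T q w q''"
| steps_letter: "(q, Some \<sigma>, q') \<in> T \<Longrightarrow> steps T q' w q'' \<Longrightarrow> steps T q (\<sigma> # w) q''"

definition L_pre :: "('q \<times> bletter option \<times> 'q) set \<Rightarrow> 'q \<Rightarrow> ('q \<Rightarrow> fval) \<Rightarrow> (bletter list \<times> fval) set" where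
  "L_pre T s f = {(w, f q) | w q. steps T s w q \<and> f q \<in> {F1, FTop}}"

definition L_0 :: "('q \<times> bletter option \<times> 'q) set \<Rightarrow> 'q \<Rightarrow> ('q \<Rightarrow> fval) \<Rightarrow> bletter list set" where
  "L_0 T s f = closed_strings {} \<inter>
     ({w. (w, F1) \<in> L_pre T s f} \<union> {v @ u | v u. (v, FTop) \<in> L_pre T s f})"

definition L_alpha :: "('q \<times> bletter option \<times> 'q) set \<Rightarrow> 'q \<Rightarrow> ('q \<Rightarrow> fval) \<Rightarrow> bletter list set set" where
  "L_alpha T s f = L_0 T s f // alpha_rel"

end

theory Submission
  imports Defs "HOL-Library.FuncSet"
begin

subsection \<open>Permutation basics\<close>

lemma swap_conj: "Perm.swap (Perm.apply p a) (Perm.apply p c) * p = p * Perm.swap a c"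
proof (rule perm_eqI)
  fix x
  show "Perm.apply (Perm.swap (Perm.apply p a) (Perm.apply p c) * p) x = Perm.apply (p * Perm.swap a c) x"
    by (cases "x = a"; cases "x = c") (auto simp: apply_times apply_inj)
qed

lemma inv_mult_perm: "inverse (p::'a perm) * p = 1" "p * inverse p = 1"
  by (simp_all add: perm.left_inverse perm.right_inverse)

lemma apply_inv_apply[simp]: "Perm.apply (inverse p) (Perm.apply p a) = a"
  "Perm.apply p (Perm.apply (inverse p) a) = a"
  by (simp_all add: apply_sequence inv_mult_perm)

definition gact :: "(name perm \<Rightarrow> 'x \<Rightarrow> 'x) \<Rightarrow> bool" where
  "gact act \<longleftrightarrow> (\<forall>x. act 1 x = x) \<and> (\<forall>p q x. act (p * q) x = act p (act q x))"

lemma supports_perm: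
  assumes g: "gact act" and S: "supports act S x"
  shows "supports act (Perm.apply p ` S) (act p x)"
  unfolding supports_def
proof (intro allI impI)
  fix s assume fs: "\<forall>a\<in>Perm.apply p ` S. Perm.apply s a = a"
  have "\<forall>a\<in>S. Perm.apply (inverse p * s * p) a = a"
    using fs by (simp add: apply_times)
  then have e: "act (inverse p * s * p) x = x" using S unfolding supports_def by blast
  have "s * p = p * (inverse p * s * p)"
    by (simp add: mult.assoc[symmetric] inv_mult_perm)
  then have "act s (act p x) = act p (act (inverse p * s * p) x)"
    using g unfolding gact_def by metis
  then show "act s (act p x) = act p x" using e by simp
qed

lemma gact_inv: "gact act \<Longrightarrow> act (inverse p) (act p x) = x"
  unfolding gact_def by (metis inv_mult_perm(1))

lemma gact_inv2: "gact act \<Longrightarrow> act p (act (inverse p) x) = x"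
  unfolding gact_def by (metis inv_mult_perm(2))

lemma supp_perm_gen:
  assumes g: "gact act"
  shows "supp act (act p x) = Perm.apply p ` supp act x"
proof -
  have A: "{S. finite S \<and> supports act S (act p x)} = (\<lambda>S. Perm.apply p ` S) ` {S. finite S \<and> supports act S x}"
  proof (rule set_eqI, rule iffI)
    fix S assume "S \<in> {S. finite S \<and> supports act S (act p x)}"
    then have "finite S" "supports act S (act p x)" by auto
    then have "supports act (Perm.apply (inverse p) ` S) x"
      using supports_perm[OF g, of S "act p x" "inverse p"] gact_inv[OF g] by simp
    moreover have "S = Perm.apply p ` (Perm.apply (inverse p) ` S)" by (auto simp: image_iff)
    ultimately show "S \<in> (\<lambda>S. Perm.apply p ` S) ` {S. finite S \<and> supports act S x}"
      using \<open>finite S\<close> by blast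
  next
    fix S assume "S \<in> (\<lambda>S. Perm.apply p ` S) ` {S. finite S \<and> supports act S x}"
    then show "S \<in> {S. finite S \<and> supports act S (act p x)}"
      using supports_perm[OF g] by blast
  qed
  have "Perm.apply p ` \<Inter>{S. finite S \<and> supports act S x} = (\<Inter>S\<in>{S. finite S \<and> supports act S x}. Perm.apply p ` S)"
    using bij_image_INT[OF bij_apply, of p "\<lambda>S. S" "{S. finite S \<and> supports act S x}"] by simp
  then show ?thesis unfolding supp_def A by simp
qed

lemma abs_eq_perm_gen:
  assumes g: "gact act" and ab: "abs_eq act a x b y"
  shows "abs_eq act (Perm.apply p a) (act p x) (Perm.apply p b) (act p y)"
proof -
  obtain c where c: "c \<noteq> a" "c \<noteq> b" "c \<notin> supp act x" "c \<notin> supp act y"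
    "act (Perm.swap a c) x = act (Perm.swap b c) y" using ab unfolding abs_eq_def by blast
  have "act (Perm.swap (Perm.apply p a) (Perm.apply p c)) (act p x) = act p (act (Perm.swap a c) x)"
    using g unfolding gact_def by (metis swap_conj)
  moreover have "act (Perm.swap (Perm.apply p b) (Perm.apply p c)) (act p y) = act p (act (Perm.swap b c) y)"
    using g unfolding gact_def by (metis swap_conj)
  ultimately show ?thesis unfolding abs_eq_def using c
    by (intro exI[of _ "Perm.apply p c"]) (auto simp: supp_perm_gen[OF g] apply_inj)
qed


lemma fresh_ex: "finite (X::nat set) \<Longrightarrow> \<exists>c. c \<notin> X"
  using ex_new_if_finite[OF infinite_UNIV_nat] by auto

fun nm :: "bletter \<Rightarrow> name" where
  "nm (Plain a) = a" | "nm (Bar a) = a"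

definition names_bs :: "bletter list \<Rightarrow> name set" where
  "names_bs w = nm ` set w"

fun names_form :: "form \<Rightarrow> name set" where
  "names_form Eps = {}"
| "names_form NEps = {}"
| "names_form (Conj \<phi> \<psi>) = names_form \<phi> \<union> names_form \<psi>"
| "names_form (Disj \<phi> \<psi>) = names_form \<phi> \<union> names_form \<psi>"
| "names_form (Dia \<sigma> \<phi>) = insert (nm \<sigma>) (names_form \<phi>)"
| "names_form (Box \<sigma> \<phi>) = insert (nm \<sigma>) (names_form \<phi>)"
| "names_form (Var X A) = A"
| "names_form (Mu X \<phi>) = names_form \<phi>"

lemma nm_perm[simp]: "nm (perm_bl p x) = Perm.apply p (nm x)"
  by (cases x) auto

lemma perm_bl_1[simp]: "perm_bl 1 x = x" by (cases x) auto
lemma perm_bl_1'[simp]: "perm_bl 1 = id" by (rule ext) simp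
lemma perm_bl_times: "perm_bl (p * q) x = perm_bl p (perm_bl q x)"
  by (cases x) (auto simp: apply_times)

lemma perm_bl_agree: "Perm.apply p (nm x) = Perm.apply q (nm x) \<Longrightarrow> perm_bl p x = perm_bl q x"
  by (cases x) auto

lemma perm_bs_simps[simp]: "perm_bs p [] = []" "perm_bs p (x # w) = perm_bl p x # perm_bs p w"
  "perm_bs p (w @ u) = perm_bs p w @ perm_bs p u"
  by (auto simp: perm_bs_def)

lemma length_perm_bs[simp]: "length (perm_bs p w) = length w" by (simp add: perm_bs_def)

lemma names_bs_simps[simp]: "names_bs [] = {}" "names_bs (x # w) = insert (nm x) (names_bs w)"
  "names_bs (w @ u) = names_bs w \<union> names_bs u"
  by (auto simp: names_bs_def)

lemma finite_names_bs[simp]: "finite (names_bs w)" by (simp add: names_bs_def)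

lemma gact_bs: "gact perm_bs"
  unfolding gact_def perm_bs_def by (auto simp: perm_bl_times comp_def)

lemma perm_bs_1[simp]: "perm_bs 1 w = w" by (simp add: perm_bs_def)
lemma perm_bs_times: "perm_bs (p * q) w = perm_bs p (perm_bs q w)"
  using gact_bs unfolding gact_def by blast

lemma names_bs_perm[simp]: "names_bs (perm_bs p w) = Perm.apply p ` names_bs w"
  by (induction w) auto

lemma perm_bs_agree: "(\<forall>a\<in>names_bs w. Perm.apply p a = Perm.apply q a) \<Longrightarrow> perm_bs p w = perm_bs q w"
  by (induction w) (auto intro: perm_bl_agree)

lemma perm_bs_fix: "(\<forall>a\<in>names_bs w. Perm.apply p a = a) \<Longrightarrow> perm_bs p w = w"
  using perm_bs_agree[of w p 1] by simp

lemma perm_bs_swap_twice[simp]: "perm_bs (Perm.swap a b) (perm_bs (Perm.swap a b) w) = w"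
  by (simp add: perm_bs_times[symmetric])

lemma perm_bs_swap_fresh: "a \<notin> names_bs w \<Longrightarrow> b \<notin> names_bs w \<Longrightarrow> perm_bs (Perm.swap a b) w = w"
  by (rule perm_bs_fix) (auto intro!: apply_swap_same)

lemma perm_form_1[simp]: "perm_form 1 \<phi> = \<phi>" by (induction \<phi>) auto
lemma perm_form_times: "perm_form (p * q) \<phi> = perm_form p (perm_form q \<phi>)"
  by (induction \<phi>) (auto simp: perm_bl_times apply_times image_comp)

lemma gact_form: "gact perm_form"
  unfolding gact_def by (simp add: perm_form_times)

lemma names_form_perm[simp]: "names_form (perm_form p \<phi>) = Perm.apply p ` names_form \<phi>"
  by (induction \<phi>) auto

lemma perm_form_agree: "(\<forall>a\<in>names_form \<phi>. Perm.apply p a = Perm.apply q a) \<Longrightarrow> perm_form p \<phi> = perm_form q \<phi>"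
  by (induction \<phi>) (auto intro: perm_bl_agree)

lemma perm_form_fix: "(\<forall>a\<in>names_form \<phi>. Perm.apply p a = a) \<Longrightarrow> perm_form p \<phi> = \<phi>"
  using perm_form_agree[of \<phi> p 1] by simp

lemma perm_form_swap_twice[simp]: "perm_form (Perm.swap a b) (perm_form (Perm.swap a b) \<phi>) = \<phi>"
  by (simp add: perm_form_times[symmetric])

lemma perm_form_swap_fresh: "a \<notin> names_form \<phi> \<Longrightarrow> b \<notin> names_form \<phi> \<Longrightarrow> perm_form (Perm.swap a b) \<phi> = \<phi>"
  by (rule perm_form_fix) (auto intro!: apply_swap_same)

subsection \<open>Supports of strings and formulas\<close>

lemma supports_names_gen:
  assumes fin: "finite S" and sup: "supports act S x"
    and agree: "\<And>p. (\<forall>a\<in>N. Perm.apply p a = a) \<Longrightarrow> act p x = x"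
    and nms: "\<And>p. names (act p x) = Perm.apply p ` N" and nx: "names x = N" and finN: "finite N"
  shows "N \<subseteq> S"
proof
  fix a assume aN: "a \<in> N"
  show "a \<in> S"
  proof (rule ccontr)
    assume aS: "a \<notin> S"
    obtain c where c: "c \<notin> S \<union> N" using fresh_ex[of "S \<union> N"] fin finN by auto
    have "\<forall>b\<in>S. Perm.apply (Perm.swap a c) b = b" using aS c by (auto intro!: apply_swap_same)
    then have "act (Perm.swap a c) x = x" using sup unfolding supports_def by blast
    then have "names x = Perm.apply (Perm.swap a c) ` N" using nms[of "Perm.swap a c"] by simp
    then have "Perm.apply (Perm.swap a c) a \<in> N" using aN nx by blast
    then show False using c by simp
  qed
qed

lemma supp_bs: "supp perm_bs w = names_bs w"
proof -
  have sup: "supports perm_bs (names_bs w) w" unfolding supports_def by (auto intro: perm_bs_fix)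
  have sub: "\<And>S. finite S \<Longrightarrow> supports perm_bs S w \<Longrightarrow> names_bs w \<subseteq> S"
  proof -
    fix S assume "finite S" "supports perm_bs S w"
    show "names_bs w \<subseteq> S"
      by (rule supports_names_gen[where act=perm_bs and names=names_bs and x=w, OF \<open>finite S\<close> \<open>supports perm_bs S w\<close>])
        (simp_all add: perm_bs_fix)
  qed
  show ?thesis unfolding supp_def
  proof (rule antisym)
    show "\<Inter> {S. finite S \<and> supports perm_bs S w} \<subseteq> names_bs w" using sup by (intro Inter_lower) simp
    show "names_bs w \<subseteq> \<Inter> {S. finite S \<and> supports perm_bs S w}" using sub by (intro Inter_greatest) simp
  qed
qed

lemma supp_form: "finite (names_form \<phi>) \<Longrightarrow> supp perm_form \<phi> = names_form \<phi>"
proof -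
  assume fin: "finite (names_form \<phi>)"
  have sup: "supports perm_form (names_form \<phi>) \<phi>" unfolding supports_def by (auto intro: perm_form_fix)
  have sub: "\<And>S. finite S \<Longrightarrow> supports perm_form S \<phi> \<Longrightarrow> names_form \<phi> \<subseteq> S"
  proof -
    fix S assume "finite S" "supports perm_form S \<phi>"
    show "names_form \<phi> \<subseteq> S"
      by (rule supports_names_gen[where act=perm_form and names=names_form and x=\<phi>, OF \<open>finite S\<close> \<open>supports perm_form S \<phi>\<close>])
        (simp_all add: perm_form_fix fin)
  qed
  show ?thesis unfolding supp_def
  proof (rule antisym)
    show "\<Inter> {S. finite S \<and> supports perm_form S \<phi>} \<subseteq> names_form \<phi>" using sup fin by (intro Inter_lower) simp
    show "names_form \<phi> \<subseteq> \<Inter> {S. finite S \<and> supports perm_form S \<phi>}" using sub by (intro Inter_greatest) simp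
  qed
qed


lemma swap_chain_apply: "x \<noteq> d \<Longrightarrow> x \<noteq> d' \<Longrightarrow>
  Perm.apply (Perm.swap d d') (Perm.apply (Perm.swap b d') x) = Perm.apply (Perm.swap b d) x"
  by (cases "x = b") auto

lemma perm_bs_swap_chain: "d \<notin> names_bs v \<Longrightarrow> d' \<notin> names_bs v \<Longrightarrow>
  perm_bs (Perm.swap d d') (perm_bs (Perm.swap b d') v) = perm_bs (Perm.swap b d) v"
  unfolding perm_bs_times[symmetric]
  apply (rule perm_bs_agree, intro ballI)
  apply (simp only: apply_times comp_def)
  apply (rule swap_chain_apply)
  by auto

lemma perm_form_swap_chain: "d \<notin> names_form v \<Longrightarrow> d' \<notin> names_form v \<Longrightarrow>
  perm_form (Perm.swap d d') (perm_form (Perm.swap b d') v) = perm_form (Perm.swap b d) v"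
  unfolding perm_form_times[symmetric]
  apply (rule perm_form_agree, intro ballI)
  apply (simp only: apply_times comp_def)
  apply (rule swap_chain_apply)
  by auto

lemma swap_image_fresh: "d \<notin> X \<Longrightarrow> Perm.apply (Perm.swap b d) ` X - {d} = X - {b}"
proof (rule set_eqI, rule iffI)
  fix y assume "d \<notin> X" "y \<in> Perm.apply (Perm.swap b d) ` X - {d}"
  then obtain z where z: "z \<in> X" "y = Perm.apply (Perm.swap b d) z" "y \<noteq> d" by auto
  then have "z \<noteq> b" "z \<noteq> d" using \<open>d \<notin> X\<close> by auto
  then show "y \<in> X - {b}" using z by simp
next
  fix y assume "d \<notin> X" "y \<in> X - {b}"
  then have "y \<noteq> d" "y \<noteq> b" "y \<in> X" by auto
  then show "y \<in> Perm.apply (Perm.swap b d) ` X - {d}"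
    by (auto intro!: image_eqI[of y _ y])
qed

subsection \<open>Abstractions for strings and formulas\<close>

lemma gact_swap_twice: "gact act \<Longrightarrow> act (Perm.swap a b) (act (Perm.swap a b) x) = x"
proof -
  assume g: "gact act"
  then have "act (Perm.swap a b * Perm.swap a b) x = act (Perm.swap a b) (act (Perm.swap a b) x)"
    unfolding gact_def by blast
  then show ?thesis using g unfolding gact_def by simp
qed

lemma abs_same: "gact act \<Longrightarrow> abs_eq act a x a y \<Longrightarrow> x = y"
proof -
  assume g: "gact act" and "abs_eq act a x a y"
  then obtain c where "act (Perm.swap a c) x = act (Perm.swap a c) y" unfolding abs_eq_def by blast
  then have "act (Perm.swap a c) (act (Perm.swap a c) x) = act (Perm.swap a c) (act (Perm.swap a c) y)"
    by simp
  then show "x = y" using gact_swap_twice[OF g] by simp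
qed

lemma abs_fresh_bs: "b' \<notin> names_bs v \<Longrightarrow> abs_eq perm_bs b v b' (perm_bs (Perm.swap b b') v)"
proof -
  assume b': "b' \<notin> names_bs v"
  obtain e where e: "e \<notin> names_bs v \<union> {b, b'}" using fresh_ex[of "names_bs v \<union> {b, b'}"] by auto
  have "perm_bs (Perm.swap b' e) (perm_bs (Perm.swap b b') v) = perm_bs (Perm.swap b e) v"
    using perm_bs_swap_chain[of e v b' b] b' e by (simp add: swap_sym)
  moreover have "e \<notin> names_bs (perm_bs (Perm.swap b b') v)" using e by (auto simp: image_iff)
  ultimately show ?thesis unfolding abs_eq_def supp_bs using e by (intro exI[of _ e]) auto
qed

lemma abs_fresh_form: "finite (names_form v) \<Longrightarrow> b' \<notin> names_form v \<Longrightarrow>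
   abs_eq perm_form b v b' (perm_form (Perm.swap b b') v)"
proof -
  assume fin: "finite (names_form v)" and b': "b' \<notin> names_form v"
  obtain e where e: "e \<notin> names_form v \<union> {b, b'}" using fresh_ex[of "names_form v \<union> {b, b'}"] fin by auto
  have "perm_form (Perm.swap b' e) (perm_form (Perm.swap b b') v) = perm_form (Perm.swap b e) v"
    using perm_form_swap_chain[of e v b' b] b' e by (simp add: swap_sym)
  moreover have "e \<notin> names_form (perm_form (Perm.swap b b') v)" using e by (auto simp: image_iff)
  moreover have "finite (names_form (perm_form (Perm.swap b b') v))" using fin by simp
  ultimately show ?thesis unfolding abs_eq_def using e fin
    by (intro exI[of _ e]) (auto simp: supp_form)
qed

lemma abs_form_inv:
  assumes fin: "finite (names_form \<psi>)" and ab: "abs_eq perm_form c \<psi> b \<psi>'"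
  shows "\<psi>' = perm_form (Perm.swap c b) \<psi> \<and> (b = c \<or> b \<notin> names_form \<psi>)"
proof -
  obtain e where e: "e \<noteq> c" "e \<noteq> b" "e \<notin> supp perm_form \<psi>" "e \<notin> supp perm_form \<psi>'"
    and eq: "perm_form (Perm.swap c e) \<psi> = perm_form (Perm.swap b e) \<psi>'"
    using ab unfolding abs_eq_def by blast
  have psi': "\<psi>' = perm_form (Perm.swap b e) (perm_form (Perm.swap c e) \<psi>)"
    using eq by simp
  have fin': "finite (names_form \<psi>')" using fin psi' by simp
  have en: "e \<notin> names_form \<psi>" "e \<notin> names_form \<psi>'" using e fin fin' by (auto simp: supp_form)
  show ?thesis
  proof (cases "b = c")
    case True then show ?thesis using psi' by simp
  next
    case False
    have "b \<notin> names_form (perm_form (Perm.swap b e) \<psi>')"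
    proof
      assume "b \<in> names_form (perm_form (Perm.swap b e) \<psi>')"
      then have "b \<in> Perm.apply (Perm.swap b e) ` names_form \<psi>'" by simp
      then obtain x where x: "x \<in> names_form \<psi>'" "b = Perm.apply (Perm.swap b e) x" by blast
      then have "x = e" using apply_swap_eq_iff(1)[of b e x] by simp
      then show False using en x by simp
    qed
    then have "b \<notin> names_form (perm_form (Perm.swap c e) \<psi>)" using eq by simp
    then have bn: "b \<notin> names_form \<psi>" using False e by (auto simp: image_iff)
    have "perm_form (Perm.swap b e) (perm_form (Perm.swap c e) \<psi>) = perm_form (Perm.swap c b) \<psi>"
      unfolding perm_form_times[symmetric]
    proof (rule perm_form_agree, intro ballI)
      fix x assume x: "x \<in> names_form \<psi>"
      then have "x \<noteq> e" "x \<noteq> b" using en bn by auto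
      then show "Perm.apply (Perm.swap b e * Perm.swap c e) x = Perm.apply (Perm.swap c b) x"
        using False e by (cases "x = c") (auto simp: apply_times)
    qed
    then show ?thesis using psi' bn by simp
  qed
qed


lemma alpha_perm: "alpha_eq w u \<Longrightarrow> alpha_eq (perm_bs p w) (perm_bs p u)"
proof (induction rule: alpha_eq.induct)
  case (alpha_step a v b u w)
  have "abs_eq perm_bs (Perm.apply p a) (perm_bs p v) (Perm.apply p b) (perm_bs p u)"
    using abs_eq_perm_gen[OF gact_bs alpha_step] .
  then show ?case using alpha_eq.alpha_step by simp
qed (auto intro: alpha_eq.intros)

lemma alpha_cons: "alpha_eq v v' \<Longrightarrow> alpha_eq (x # v) (x # v')"
proof (induction rule: alpha_eq.induct)
  case (alpha_step a v b u w)
  then show ?case using alpha_eq.alpha_step[of a v b u "x # w"] by simp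
qed (auto intro: alpha_eq.intros)

lemma alpha_rename: "b' \<notin> names_bs v \<Longrightarrow> alpha_eq (Bar b # v) (Bar b' # perm_bs (Perm.swap b b') v)"
  using alpha_eq.alpha_step[of b v b' "perm_bs (Perm.swap b b') v" "[]"] abs_fresh_bs by simp

lemma alpha_length: "alpha_eq w u \<Longrightarrow> length w = length u"
proof (induction rule: alpha_eq.induct)
  case (alpha_step a v b u w)
  then obtain c where "perm_bs (Perm.swap a c) v = perm_bs (Perm.swap b c) u" unfolding abs_eq_def by blast
  then have "length v = length u" by (metis length_perm_bs)
  then show ?case by simp
qed auto

definition AP :: "bletter list \<Rightarrow> bletter list \<Rightarrow> bool" where
  "AP w u \<longleftrightarrow> (w = [] \<longrightarrow> u = []) \<and>
     (\<forall>a v. w = Plain a # v \<longrightarrow> (\<exists>v'. u = Plain a # v' \<and> alpha_eq v v')) \<and>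
     (\<forall>b v. w = Bar b # v \<longrightarrow> (\<exists>c u'. u = Bar c # u' \<and>
        (\<forall>d. d \<notin> names_bs v \<union> names_bs u' \<union> {b, c} \<longrightarrow>
            alpha_eq (perm_bs (Perm.swap b d) v) (perm_bs (Perm.swap c d) u'))))"

lemma AP_Nil_D: "AP [] u \<Longrightarrow> u = []" by (simp add: AP_def)
lemma AP_Plain_D: "AP (Plain a # v) u \<Longrightarrow> \<exists>v'. u = Plain a # v' \<and> alpha_eq v v'"
  unfolding AP_def by blast
lemma AP_Bar_D: "AP (Bar b # v) u \<Longrightarrow> \<exists>c u'. u = Bar c # u' \<and>
        (\<forall>d. d \<notin> names_bs v \<union> names_bs u' \<union> {b, c} \<longrightarrow>
            alpha_eq (perm_bs (Perm.swap b d) v) (perm_bs (Perm.swap c d) u'))"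
  unfolding AP_def by blast
lemma AP_Nil_I: "AP [] []" by (simp add: AP_def)
lemma AP_Plain_I: "alpha_eq v v' \<Longrightarrow> AP (Plain a # v) (Plain a # v')"
  by (simp add: AP_def)
lemma AP_Bar_I: "(\<And>d. d \<notin> names_bs v \<union> names_bs u' \<union> {b, c} \<Longrightarrow>
            alpha_eq (perm_bs (Perm.swap b d) v) (perm_bs (Perm.swap c d) u')) \<Longrightarrow> AP (Bar b # v) (Bar c # u')"
  unfolding AP_def by blast

lemma AP_refl: "AP w w"
proof (cases w)
  case Nil then show ?thesis by (simp add: AP_Nil_I)
next
  case (Cons x v) then show ?thesis by (cases x) (auto intro!: AP_Plain_I AP_Bar_I alpha_refl)
qed

lemma AP_sym: "AP w u \<Longrightarrow> AP u w"
proof (cases w)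
  case Nil
  assume "AP w u" then show ?thesis using Nil AP_Nil_D AP_Nil_I by blast
next
  case (Cons x w')
  assume ap: "AP w u"
  show ?thesis
  proof (cases x)
    case (Plain a)
    then obtain v' where "u = Plain a # v'" "alpha_eq w' v'" using ap Cons AP_Plain_D by blast
    then show ?thesis using Cons Plain by (auto intro!: AP_Plain_I alpha_sym)
  next
    case (Bar b)
    then obtain c u' where u: "u = Bar c # u'" and h: "\<forall>d. d \<notin> names_bs w' \<union> names_bs u' \<union> {b, c} \<longrightarrow>
            alpha_eq (perm_bs (Perm.swap b d) w') (perm_bs (Perm.swap c d) u')"
      using ap Cons AP_Bar_D by blast
    have "AP (Bar c # u') (Bar b # w')"
    proof (rule AP_Bar_I)
      fix d assume "d \<notin> names_bs u' \<union> names_bs w' \<union> {c, b}"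
      then have "d \<notin> names_bs w' \<union> names_bs u' \<union> {b, c}" by blast
      then show "alpha_eq (perm_bs (Perm.swap c d) u') (perm_bs (Perm.swap b d) w')"
        using h by (blast intro: alpha_sym)
    qed
    then show ?thesis using u Cons Bar by simp
  qed
qed

lemma fresh_obtain:
  assumes "finite (X::nat set)"
  obtains c where "c \<notin> X"
  using fresh_ex[OF assms] by blast

lemma AP_trans: "AP w x \<Longrightarrow> AP x u \<Longrightarrow> AP w u"
proof (cases w)
  case Nil
  assume "AP w x" "AP x u" then show ?thesis using Nil AP_Nil_D AP_Nil_I by blast
next
  case (Cons y w')
  assume wx: "AP w x" and xu: "AP x u"
  show ?thesis
  proof (cases y)
    case (Plain a)
    then obtain v' where x: "x = Plain a # v'" "alpha_eq w' v'" using wx Cons AP_Plain_D by blast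
    then obtain v'' where "u = Plain a # v''" "alpha_eq v' v''" using xu AP_Plain_D by blast
    then show ?thesis using Cons Plain x by (auto intro!: AP_Plain_I intro: alpha_trans)
  next
    case (Bar b)
    then obtain c x' where x: "x = Bar c # x'" and h1: "\<forall>d. d \<notin> names_bs w' \<union> names_bs x' \<union> {b, c} \<longrightarrow>
          alpha_eq (perm_bs (Perm.swap b d) w') (perm_bs (Perm.swap c d) x')"
      using wx Cons AP_Bar_D by blast
    then obtain e u' where u: "u = Bar e # u'" and h2: "\<forall>d. d \<notin> names_bs x' \<union> names_bs u' \<union> {c, e} \<longrightarrow>
          alpha_eq (perm_bs (Perm.swap c d) x') (perm_bs (Perm.swap e d) u')"
      using xu AP_Bar_D by blast
    have "AP (Bar b # w') (Bar e # u')"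
    proof (rule AP_Bar_I)
      fix d assume d: "d \<notin> names_bs w' \<union> names_bs u' \<union> {b, e}"
      obtain d' where d': "d' \<notin> names_bs w' \<union> names_bs x' \<union> names_bs u' \<union> {b, c, e, d}"
        by (rule fresh_obtain[of "names_bs w' \<union> names_bs x' \<union> names_bs u' \<union> {b, c, e, d}"]) auto
      have a1: "alpha_eq (perm_bs (Perm.swap b d') w') (perm_bs (Perm.swap c d') x')"
        by (rule h1[rule_format]) (use d' in blast)
      have a2: "alpha_eq (perm_bs (Perm.swap c d') x') (perm_bs (Perm.swap e d') u')"
        by (rule h2[rule_format]) (use d' in blast)
      have "alpha_eq (perm_bs (Perm.swap d d') (perm_bs (Perm.swap b d') w'))
             (perm_bs (Perm.swap d d') (perm_bs (Perm.swap e d') u'))"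
        by (rule alpha_perm, rule alpha_trans[OF a1 a2])
      moreover have "perm_bs (Perm.swap d d') (perm_bs (Perm.swap b d') w') = perm_bs (Perm.swap b d) w'"
        by (rule perm_bs_swap_chain) (use d d' in blast)+
      moreover have "perm_bs (Perm.swap d d') (perm_bs (Perm.swap e d') u') = perm_bs (Perm.swap e d) u'"
        by (rule perm_bs_swap_chain) (use d d' in blast)+
      ultimately show "alpha_eq (perm_bs (Perm.swap b d) w') (perm_bs (Perm.swap e d) u')" by simp
    qed
    then show ?thesis using u Cons Bar by simp
  qed
qed

lemma AP_step: "abs_eq perm_bs a v b u \<Longrightarrow> AP (w @ Bar a # v) (w @ Bar b # u)"
proof (cases w)
  case Nil
  assume ab: "abs_eq perm_bs a v b u"
  obtain e where e: "e \<noteq> a" "e \<noteq> b" "e \<notin> names_bs v" "e \<notin> names_bs u"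
    and eq: "perm_bs (Perm.swap a e) v = perm_bs (Perm.swap b e) u"
    using ab unfolding abs_eq_def supp_bs by blast
  have "AP (Bar a # v) (Bar b # u)"
  proof (rule AP_Bar_I)
    fix d assume d: "d \<notin> names_bs v \<union> names_bs u \<union> {a, b}"
    have "perm_bs (Perm.swap a d) v = perm_bs (Perm.swap d e) (perm_bs (Perm.swap a e) v)"
      by (rule perm_bs_swap_chain[symmetric]) (use d e in blast)+
    also have "\<dots> = perm_bs (Perm.swap d e) (perm_bs (Perm.swap b e) u)" using eq by simp
    also have "\<dots> = perm_bs (Perm.swap b d) u"
      by (rule perm_bs_swap_chain) (use d e in blast)+
    finally show "alpha_eq (perm_bs (Perm.swap a d) v) (perm_bs (Perm.swap b d) u)"
      by (simp add: alpha_refl)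
  qed
  then show ?thesis using Nil by simp
next
  case (Cons y w')
  assume ab: "abs_eq perm_bs a v b u"
  have st: "alpha_eq (w' @ Bar a # v) (w' @ Bar b # u)" by (rule alpha_eq.alpha_step[OF ab])
  show ?thesis
  proof (cases y)
    case (Plain c)
    then show ?thesis using Cons AP_Plain_I[OF st] by simp
  next
    case (Bar c)
    have "AP (Bar c # (w' @ Bar a # v)) (Bar c # (w' @ Bar b # u))"
      by (rule AP_Bar_I, rule alpha_perm[OF st])
    then show ?thesis using Cons Bar by simp
  qed
qed

lemma alpha_AP: "alpha_eq w u \<Longrightarrow> AP w u"
proof (induction rule: alpha_eq.induct)
  case (alpha_refl w) then show ?case by (rule AP_refl)
next
  case (alpha_sym w u) then show ?case using AP_sym by blast
next
  case (alpha_trans w u v) then show ?case using AP_trans by blast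
next
  case (alpha_step a v b u w) then show ?case by (rule AP_step)
qed

lemma alpha_Nil: "alpha_eq [] u \<Longrightarrow> u = []"
  using alpha_AP AP_Nil_D by blast

lemma alpha_Plain: "alpha_eq (Plain a # v) u \<Longrightarrow> \<exists>v'. u = Plain a # v' \<and> alpha_eq v v'"
  using alpha_AP AP_Plain_D by blast

lemma alpha_Bar: "alpha_eq (Bar b # v) u \<Longrightarrow> \<exists>c u'. u = Bar c # u' \<and>
        (\<forall>d. d \<notin> names_bs v \<union> names_bs u' \<union> {b, c} \<longrightarrow>
            alpha_eq (perm_bs (Perm.swap b d) v) (perm_bs (Perm.swap c d) u'))"
  using alpha_AP AP_Bar_D by blast

lemma alpha_Plain_Bar: "\<not> alpha_eq (Plain a # v) (Bar b # u)"
proof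
  assume "alpha_eq (Plain a # v) (Bar b # u)"
  from alpha_Plain[OF this] show False by auto
qed

lemma alpha_Nil_Cons: "\<not> alpha_eq [] (x # u)"
proof
  assume "alpha_eq [] (x # u)"
  from alpha_Nil[OF this] show False by auto
qed


subsection \<open>Free names of strings\<close>

lemma FN_bs_Nil[simp]: "FN_bs [] = {}" by (simp add: FN_bs_def)

lemma FN_bs_Cons: "FN_bs (x # v) = {a. x = Plain a} \<union> {a. a \<in> FN_bs v \<and> x \<noteq> Bar a}"
proof (rule set_eqI, rule iffI)
  fix a assume "a \<in> FN_bs (x # v)"
  then obtain i where i: "i < length (x # v)" "(x # v) ! i = Plain a" "\<forall>j<i. (x # v) ! j \<noteq> Bar a"
    unfolding FN_bs_def by blast
  show "a \<in> {a. x = Plain a} \<union> {a. a \<in> FN_bs v \<and> x \<noteq> Bar a}"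
  proof (cases i)
    case 0 then show ?thesis using i by simp
  next
    case (Suc k)
    have "x \<noteq> Bar a" using i(3)[rule_format, of 0] Suc by simp
    moreover have "k < length v" "v ! k = Plain a" "\<forall>j<k. v ! j \<noteq> Bar a"
      using i Suc by auto
    ultimately show ?thesis unfolding FN_bs_def by blast
  qed
next
  fix a assume "a \<in> {a. x = Plain a} \<union> {a. a \<in> FN_bs v \<and> x \<noteq> Bar a}"
  then consider "x = Plain a" | "a \<in> FN_bs v" "x \<noteq> Bar a" by blast
  then show "a \<in> FN_bs (x # v)"
  proof cases
    case 1 then show ?thesis unfolding FN_bs_def by (intro CollectI exI[of _ 0]) simp
  next
    case 2
    then obtain k where k: "k < length v" "v ! k = Plain a" "\<forall>j<k. v ! j \<noteq> Bar a"
      unfolding FN_bs_def by blast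
    have "\<forall>j<Suc k. (x # v) ! j \<noteq> Bar a"
    proof (intro allI impI)
      fix j assume "j < Suc k"
      then show "(x # v) ! j \<noteq> Bar a" using k 2 by (cases j) auto
    qed
    then show ?thesis unfolding FN_bs_def using k by (intro CollectI exI[of _ "Suc k"]) simp
  qed
qed

lemma FN_bs_Plain[simp]: "FN_bs (Plain a # v) = insert a (FN_bs v)"
  by (auto simp: FN_bs_Cons)

lemma FN_bs_Bar[simp]: "FN_bs (Bar b # v) = FN_bs v - {b}"
  by (auto simp: FN_bs_Cons)

lemma FN_bs_sub: "FN_bs w \<subseteq> names_bs w"
  by (induction w) (auto simp: FN_bs_Cons)

lemma FN_bs_perm: "FN_bs (perm_bs p w) = Perm.apply p ` FN_bs w"
proof (induction w)
  case Nil then show ?case by simp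
next
  case (Cons x w)
  show ?case
  proof (cases x)
    case (Plain a) then show ?thesis using Cons by simp
  next
    case (Bar b) then show ?thesis using Cons by (auto simp: apply_inj)
  qed
qed

lemma alpha_FN_aux: "\<forall>w u. length w = n \<longrightarrow> alpha_eq w u \<longrightarrow> FN_bs w = FN_bs u"
proof (induction n rule: less_induct)
  case (less n)
  show ?case
  proof (intro allI impI)
    fix w u assume len: "length w = n" and al: "alpha_eq w u"
    show "FN_bs w = FN_bs u"
    proof (cases w)
      case Nil then show ?thesis using alpha_Nil[of u] al by simp
    next
      case (Cons x v)
      show ?thesis
      proof (cases x)
        case (Plain a)
        then obtain v' where "u = Plain a # v'" "alpha_eq v v'" using alpha_Plain al Cons by blast
        moreover have "length v < n" using len Cons by simp
        ultimately show ?thesis using less Cons Plain by simp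
      next
        case (Bar b)
        then obtain c u' where u: "u = Bar c # u'" and h: "\<forall>d. d \<notin> names_bs v \<union> names_bs u' \<union> {b, c} \<longrightarrow>
            alpha_eq (perm_bs (Perm.swap b d) v) (perm_bs (Perm.swap c d) u')"
          using alpha_Bar al Cons by blast
        obtain d where d: "d \<notin> names_bs v \<union> names_bs u' \<union> {b, c}"
          by (rule fresh_obtain[of "names_bs v \<union> names_bs u' \<union> {b, c}"]) auto
        have "length (perm_bs (Perm.swap b d) v) < n" using len Cons by simp
        then have "FN_bs (perm_bs (Perm.swap b d) v) = FN_bs (perm_bs (Perm.swap c d) u')"
          using less h d by blast
        then have "Perm.apply (Perm.swap b d) ` FN_bs v - {d} = Perm.apply (Perm.swap c d) ` FN_bs u' - {d}"
          by (simp add: FN_bs_perm)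
        moreover have "d \<notin> FN_bs v" "d \<notin> FN_bs u'" using d FN_bs_sub by blast+
        ultimately have "FN_bs v - {b} = FN_bs u' - {c}" by (simp add: swap_image_fresh)
        then show ?thesis using Cons Bar u by simp
      qed
    qed
  qed
qed

lemma alpha_FN: "alpha_eq w u \<Longrightarrow> FN_bs w = FN_bs u"
  using alpha_FN_aux by blast

subsection \<open>Satisfaction: basic properties\<close>

lemma perm_subst: "perm_form p (subst X t \<phi>) = subst X (perm_form p t) (perm_form p \<phi>)"
  by (induction \<phi>) auto

lemma perm_bs_inv: "perm_bs p (perm_bs (inverse p) v) = v" "perm_bs (inverse p) (perm_bs p v) = v"
  using gact_inv[OF gact_bs] gact_inv2[OF gact_bs] by auto

lemma perm_form_inv: "perm_form p (perm_form (inverse p) v) = v" "perm_form (inverse p) (perm_form p v) = v"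
  using gact_inv[OF gact_form] gact_inv2[OF gact_form] by auto

lemma sat_eqvt_aux: "sat S w \<phi> \<Longrightarrow> sat S' (perm_bs p w) (perm_form p \<phi>)"
proof (induction arbitrary: S' p rule: sat.induct)
  case (sat_eps S) then show ?case by (simp add: sat.sat_eps)
next
  case (sat_neps w S) then show ?case by (simp, intro sat.sat_neps) (simp add: perm_bs_def)
next
  case (sat_conj S w \<phi> \<psi>) then show ?case by (simp add: sat.sat_conj)
next
  case (sat_disj1 S w \<phi> \<psi>) then show ?case by (simp add: sat.sat_disj1)
next
  case (sat_disj2 S w \<psi> \<phi>) then show ?case by (simp add: sat.sat_disj2)
next
  case (sat_mu S w X \<phi>) then show ?case by (simp add: sat.sat_mu perm_subst)
next
  case (sat_dia_plain S v \<phi> a) then show ?case by (simp add: sat.sat_dia_plain)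
next
  case (sat_box_plain w a S \<phi>)
  show ?case
  proof (simp, rule sat.sat_box_plain, intro allI impI)
    fix v assume h: "perm_bs p w = Plain (Perm.apply p a) # v"
    have "w = perm_bs (inverse p) (perm_bs p w)" by (simp add: perm_bs_inv)
    also have "\<dots> = Plain a # perm_bs (inverse p) v" using h by simp
    finally have "sat S' (perm_bs p (perm_bs (inverse p) v)) (perm_form p \<phi>)"
      using sat_box_plain.IH by blast
    then show "sat S' v (perm_form p \<phi>)" by (simp add: perm_bs_inv)
  qed
next
  case (sat_dia_bar w b v a \<phi> \<psi> S)
  have "alpha_eq (perm_bs p w) (Bar (Perm.apply p b) # perm_bs p v)"
    using alpha_perm[OF sat_dia_bar.hyps(1)] by simp
  moreover have "abs_eq perm_form (Perm.apply p a) (perm_form p \<phi>) (Perm.apply p b) (perm_form p \<psi>)"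
    by (rule abs_eq_perm_gen[OF gact_form sat_dia_bar.hyps(2)])
  ultimately show ?case using sat_dia_bar.IH by (simp add: sat.sat_dia_bar)
next
  case (sat_box_bar w a \<phi> S)
  show ?case
  proof (simp, rule sat.sat_box_bar, intro allI impI, elim conjE)
    fix \<psi> v b assume al: "alpha_eq (perm_bs p w) (Bar b # v)"
      and ab: "abs_eq perm_form (Perm.apply p a) (perm_form p \<phi>) b \<psi>"
    have "alpha_eq w (Bar (Perm.apply (inverse p) b) # perm_bs (inverse p) v)"
      using alpha_perm[OF al, of "inverse p"] by (simp add: perm_bs_inv)
    moreover have "abs_eq perm_form a \<phi> (Perm.apply (inverse p) b) (perm_form (inverse p) \<psi>)"
      using abs_eq_perm_gen[OF gact_form ab, of "inverse p"] by (simp add: perm_form_inv)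
    ultimately have "sat (insert b S') (perm_bs p (perm_bs (inverse p) v)) (perm_form p (perm_form (inverse p) \<psi>))"
      using sat_box_bar.IH by blast
    then show "sat (insert b S') v \<psi>" by (simp add: perm_bs_inv perm_form_inv)
  qed
qed

lemma sat_S: "sat S w \<phi> \<Longrightarrow> sat S' w \<phi>"
  using sat_eqvt_aux[of S w \<phi> S' 1] by simp

lemma sat_eqvt: "sat S w \<phi> \<Longrightarrow> sat S (perm_bs p w) (perm_form p \<phi>)"
  using sat_eqvt_aux by blast

lemma sat_eqvt_iff: "sat S (perm_bs p w) (perm_form p \<phi>) \<longleftrightarrow> sat S w \<phi>"
  using sat_eqvt[of S "perm_bs p w" "perm_form p \<phi>" "inverse p"] sat_eqvt[of S w \<phi> p]
  by (auto simp: perm_bs_inv perm_form_inv)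

inductive_cases sat_EpsE: "sat S w Eps"
inductive_cases sat_NEpsE: "sat S w NEps"
inductive_cases sat_ConjE: "sat S w (Conj \<phi> \<psi>)"
inductive_cases sat_DisjE: "sat S w (Disj \<phi> \<psi>)"
inductive_cases sat_MuE: "sat S w (Mu X \<phi>)"
inductive_cases sat_DiaPE: "sat S w (Dia (Plain a) \<phi>)"
inductive_cases sat_DiaBE: "sat S w (Dia (Bar a) \<phi>)"
inductive_cases sat_VarE: "sat S w (Var X A)"

lemma sat_Eps_iff[simp]: "sat S w Eps \<longleftrightarrow> w = []"
  by (auto elim: sat_EpsE intro: sat.intros)
lemma sat_NEps_iff[simp]: "sat S w NEps \<longleftrightarrow> w \<noteq> []"
  by (auto elim: sat_NEpsE intro: sat.intros)
lemma sat_Conj_iff[simp]: "sat S w (Conj \<phi> \<psi>) \<longleftrightarrow> sat S w \<phi> \<and> sat S w \<psi>"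
  by (auto elim: sat_ConjE intro: sat.intros)
lemma sat_Disj_iff[simp]: "sat S w (Disj \<phi> \<psi>) \<longleftrightarrow> sat S w \<phi> \<or> sat S w \<psi>"
  by (auto elim: sat_DisjE intro: sat.intros)
lemma sat_Mu_iff: "sat S w (Mu X \<phi>) \<longleftrightarrow> sat S w (subst X (Mu X \<phi>) \<phi>)"
  by (auto elim: sat_MuE intro: sat.intros)
lemma sat_DiaP_iff: "sat S w (Dia (Plain a) \<phi>) \<longleftrightarrow> (\<exists>v. w = Plain a # v \<and> sat S v \<phi>)"
  by (auto elim: sat_DiaPE intro: sat.intros)
lemma sat_DiaB_iff: "sat S w (Dia (Bar a) \<phi>) \<longleftrightarrow>
   (\<exists>b v \<psi>. alpha_eq w (Bar b # v) \<and> abs_eq perm_form a \<phi> b \<psi> \<and> sat S v \<psi>)"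
  by (auto elim!: sat_DiaBE intro: sat.intros sat_S)
lemma sat_Var[simp]: "\<not> sat S w (Var X A)"
  by (auto elim: sat_VarE)


definition FalseF :: form where "FalseF = Conj Eps NEps"
definition TopF :: form where "TopF = Disj Eps NEps"

lemma sat_FalseF[simp]: "\<not> sat S w FalseF" by (simp add: FalseF_def)
lemma sat_TopF[simp]: "sat S w TopF" by (simp add: TopF_def)

fun disjs :: "form list \<Rightarrow> form" where
  "disjs [] = FalseF"
| "disjs (x # xs) = Disj x (disjs xs)"

lemma sat_disjs: "sat S w (disjs xs) \<longleftrightarrow> (\<exists>x\<in>set xs. sat S w x)"
  by (induction xs) auto

fun fv :: "form \<Rightarrow> nat set" where
  "fv (Conj \<phi> \<psi>) = fv \<phi> \<union> fv \<psi>"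
| "fv (Disj \<phi> \<psi>) = fv \<phi> \<union> fv \<psi>"
| "fv (Dia \<sigma> \<phi>) = fv \<phi>"
| "fv (Box \<sigma> \<phi>) = fv \<phi>"
| "fv (Var X A) = {X}"
| "fv (Mu X \<phi>) = fv \<phi> - {X}"
| "fv Eps = {}"
| "fv NEps = {}"

lemma finite_fv[simp]: "finite (fv \<phi>)" by (induction \<phi>) auto

fun ssubst :: "(nat \<Rightarrow> form option) \<Rightarrow> form \<Rightarrow> form" where
  "ssubst \<sigma> (Conj \<phi> \<psi>) = Conj (ssubst \<sigma> \<phi>) (ssubst \<sigma> \<psi>)"
| "ssubst \<sigma> (Disj \<phi> \<psi>) = Disj (ssubst \<sigma> \<phi>) (ssubst \<sigma> \<psi>)"
| "ssubst \<sigma> (Dia x \<phi>) = Dia x (ssubst \<sigma> \<phi>)"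
| "ssubst \<sigma> (Box x \<phi>) = Box x (ssubst \<sigma> \<phi>)"
| "ssubst \<sigma> (Var X A) = (case \<sigma> X of Some t \<Rightarrow> t | None \<Rightarrow> Var X A)"
| "ssubst \<sigma> (Mu X \<phi>) = Mu X (ssubst (\<sigma>(X := None)) \<phi>)"
| "ssubst \<sigma> Eps = Eps"
| "ssubst \<sigma> NEps = NEps"

lemma subst_fresh: "X \<notin> fv t \<Longrightarrow> subst X u t = t"
  by (induction t) auto

lemma ssubst_id: "\<forall>Y\<in>fv \<phi>. \<sigma> Y = None \<Longrightarrow> ssubst \<sigma> \<phi> = \<phi>"
  by (induction \<phi> arbitrary: \<sigma>) (auto split: option.splits)

lemma subst_ssubst: "(\<forall>Y t. \<sigma> Y = Some t \<longrightarrow> X \<notin> fv t) \<Longrightarrow> \<sigma> X = None \<Longrightarrow>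
   subst X t (ssubst \<sigma> \<phi>) = ssubst (\<sigma>(X \<mapsto> t)) \<phi>"
proof (induction \<phi> arbitrary: \<sigma>)
  case (Var Y A)
  then show ?case by (cases "\<sigma> Y") (auto simp: subst_fresh)
next
  case (Mu Y \<phi>)
  show ?case
  proof (cases "X = Y")
    case True
    have "(\<sigma>(X \<mapsto> t))(Y := None) = \<sigma>(Y := None)" using True by (intro ext) simp
    then have "ssubst (\<sigma>(X \<mapsto> t)) (Mu Y \<phi>) = Mu Y (ssubst (\<sigma>(Y := None)) \<phi>)"
      by (simp only: ssubst.simps)
    moreover have "subst X t (ssubst \<sigma> (Mu Y \<phi>)) = Mu Y (ssubst (\<sigma>(Y := None)) \<phi>)"
      using True by (simp only: ssubst.simps subst.simps if_True refl)
    ultimately show ?thesis by (simp only:)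
  next
    case False
    have "subst X t (ssubst (\<sigma>(Y := None)) \<phi>) = ssubst ((\<sigma>(Y := None))(X \<mapsto> t)) \<phi>"
      using Mu.prems False by (intro Mu.IH) auto
    moreover have "(\<sigma>(Y := None))(X \<mapsto> t) = (\<sigma>(X \<mapsto> t))(Y := None)" using False by auto
    moreover have "subst X t (ssubst \<sigma> (Mu Y \<phi>)) = Mu Y (subst X t (ssubst (\<sigma>(Y := None)) \<phi>))"
      using False by simp
    moreover have "ssubst (\<sigma>(X \<mapsto> t)) (Mu Y \<phi>) = Mu Y (ssubst ((\<sigma>(X \<mapsto> t))(Y := None)) \<phi>)"
      by (simp only: ssubst.simps)
    ultimately show ?thesis by (simp only:)
  qed
qed auto

lemma fv_ssubst: "(\<forall>Y t. \<sigma> Y = Some t \<longrightarrow> fv t = {}) \<Longrightarrow> fv (ssubst \<sigma> \<phi>) \<subseteq> {Y\<in>fv \<phi>. \<sigma> Y = None}"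
proof (induction \<phi> arbitrary: \<sigma>)
  case (Var Y A)
  then show ?case by (cases "\<sigma> Y") auto
next
  case (Mu Y \<phi>)
  have "fv (ssubst (\<sigma>(Y := None)) \<phi>) \<subseteq> {Z\<in>fv \<phi>. (\<sigma>(Y := None)) Z = None}"
    using Mu.prems by (intro Mu.IH) auto
  then show ?case by auto
qed auto

lemma names_ssubst: "names_form (ssubst \<sigma> \<phi>) \<subseteq> names_form \<phi> \<union>
   (\<Union>Y\<in>fv \<phi>. case \<sigma> Y of None \<Rightarrow> {} | Some t \<Rightarrow> names_form t)"
proof (induction \<phi> arbitrary: \<sigma>)
  case (Var Y A)
  then show ?case by (cases "\<sigma> Y") auto
next
  case (Mu Y \<phi>)
  have "names_form (ssubst (\<sigma>(Y := None)) \<phi>) \<subseteq> names_form \<phi> \<union>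
   (\<Union>Z\<in>fv \<phi>. case (\<sigma>(Y := None)) Z of None \<Rightarrow> {} | Some t \<Rightarrow> names_form t)" by (rule Mu.IH)
  also have "\<dots> \<subseteq> names_form \<phi> \<union> (\<Union>Z\<in>fv \<phi> - {Y}. case \<sigma> Z of None \<Rightarrow> {} | Some t \<Rightarrow> names_form t)"
    by (auto split: option.splits if_splits)
  finally show ?case by simp
next
  case (Conj \<phi>1 \<phi>2)
  then show ?case by (simp, blast)
next
  case (Disj \<phi>1 \<phi>2)
  then show ?case by (simp, blast)
qed auto

lemma finite_names_ssubst: "finite (names_form \<phi>) \<Longrightarrow>
   (\<forall>Y t. \<sigma> Y = Some t \<longrightarrow> finite (names_form t)) \<Longrightarrow> finite (names_form (ssubst \<sigma> \<phi>))"
proof -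
  assume a: "finite (names_form \<phi>)" "\<forall>Y t. \<sigma> Y = Some t \<longrightarrow> finite (names_form t)"
  have "finite (\<Union>Y\<in>fv \<phi>. case \<sigma> Y of None \<Rightarrow> {} | Some t \<Rightarrow> names_form t)"
    using a(2) by (intro finite_UN_I) (auto split: option.splits)
  then show ?thesis using names_ssubst[of \<sigma> \<phi>] a(1) by (meson finite_UnI finite_subset)
qed

lemma subst_disjs: "subst X t (disjs xs) = disjs (map (subst X t) xs)"
  by (induction xs) (auto simp: FalseF_def)

lemma ssubst_disjs: "ssubst \<sigma> (disjs xs) = disjs (map (ssubst \<sigma>) xs)"
  by (induction xs) (auto simp: FalseF_def)

lemma fv_disjs: "fv (disjs xs) = (\<Union>x\<in>set xs. fv x)"
  by (induction xs) (auto simp: FalseF_def)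

lemma names_disjs: "names_form (disjs xs) = (\<Union>x\<in>set xs. names_form x)"
  by (induction xs) (auto simp: FalseF_def)

lemma FN_disjs: "FN_form (disjs xs) = (\<Union>x\<in>set xs. FN_form x)"
  by (induction xs) (auto simp: FalseF_def)

lemma guarded_disjs: "guarded (disjs xs) \<longleftrightarrow> (\<forall>x\<in>set xs. guarded x)"
  by (induction xs) (auto simp: FalseF_def)

lemma unguarded_disjs: "unguarded X (disjs xs) \<longleftrightarrow> (\<exists>x\<in>set xs. unguarded X x)"
  by (induction xs) (auto simp: FalseF_def)

lemma wa_disjs: "well_annotated \<Gamma> (disjs xs) \<longleftrightarrow> (\<forall>x\<in>set xs. well_annotated \<Gamma> x)"
  by (induction xs) (auto simp: FalseF_def)


locale ern =
  fixes act :: "name perm \<Rightarrow> 'q \<Rightarrow> 'q" and Q :: "'q set"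
    and T :: "('q \<times> bletter option \<times> 'q) set" and s :: 'q and f :: "'q \<Rightarrow> fval"
  assumes E: "ERNNA act Q T s f"
begin

lemma Es: "nominal_set act Q" "orbit_finite act Q" "s \<in> Q" "supp act s = {}" "T \<subseteq> Q \<times> UNIV \<times> Q"
  "\<forall>\<pi> q l q'. (q, l, q') \<in> T \<longrightarrow> (act \<pi> q, perm_lbl \<pi> l, act \<pi> q') \<in> T"
  "\<forall>\<pi>. \<forall>q\<in>Q. f (act \<pi> q) = f q"
  "\<forall>q a q' b q''. (q, Some (Bar a), q') \<in> T \<longrightarrow> q'' \<in> Q \<longrightarrow> abs_eq act a q' b q''
        \<longrightarrow> (q, Some (Bar b), q'') \<in> T"
  "\<forall>q\<in>Q. finite {(a, q'). (q, Some (Plain a), q') \<in> T}"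
  "\<forall>q\<in>Q. finite {q'. (q, None, q') \<in> T}"
  "\<forall>q\<in>Q. finite ((\<lambda>(a, q'). abs_class act Q a q') ` {(a, q'). (q, Some (Bar a), q') \<in> T})"
  using E unfolding ERNNA_def by blast+

lemma Ns: "\<forall>x\<in>Q. act 1 x = x" "\<forall>\<pi> \<sigma>. \<forall>x\<in>Q. act (\<pi> * \<sigma>) x = act \<pi> (act \<sigma> x)"
     "\<forall>\<pi>. \<forall>x\<in>Q. act \<pi> x \<in> Q" "\<forall>x\<in>Q. fin_supp act x"
  using Es(1) unfolding nominal_set_def by blast+

lemma act_1[simp]: "x \<in> Q \<Longrightarrow> act 1 x = x"
  using Ns(1) by blast
lemma act_times: "x \<in> Q \<Longrightarrow> act (p * r) x = act p (act r x)"
  using Ns(2) by blast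
lemma act_Q[simp]: "x \<in> Q \<Longrightarrow> act p x \<in> Q"
  using Ns(3) by blast
lemma fin_supp_Q: "x \<in> Q \<Longrightarrow> fin_supp act x"
  using Ns(4) by blast
lemma orbfin: "finite (nom_orbit act ` Q)"
  using Es(2) unfolding orbit_finite_def by blast
lemma s_Q: "s \<in> Q" by (rule Es(3))
lemma supp_s: "supp act s = {}" by (rule Es(4))
lemma T_sub: "(q, l, q') \<in> T \<Longrightarrow> q \<in> Q \<and> q' \<in> Q" using Es(5) by blast
lemma T_eqvt: "(q, l, q') \<in> T \<Longrightarrow> (act p q, perm_lbl p l, act p q') \<in> T"
  using Es(6) by blast
lemma f_inv: "q \<in> Q \<Longrightarrow> f (act p q) = f q" using Es(7) by blast
lemma bar_cl: "(q, Some (Bar a), q') \<in> T \<Longrightarrow> q'' \<in> Q \<Longrightarrow> abs_eq act a q' b q'' \<Longrightarrow> (q, Some (Bar b), q'') \<in> T"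
  using Es(8) by blast
lemma fin_plain: "q \<in> Q \<Longrightarrow> finite {(a, q'). (q, Some (Plain a), q') \<in> T}"
  using Es(9) by blast
lemma fin_eps: "q \<in> Q \<Longrightarrow> finite {q'. (q, None, q') \<in> T}"
  using Es(10) by blast
lemma fin_bar: "q \<in> Q \<Longrightarrow> finite ((\<lambda>(a, q'). abs_class act Q a q') ` {(a, q'). (q, Some (Bar a), q') \<in> T})"
  using Es(11) by blast

lemma act_inv[simp]: "x \<in> Q \<Longrightarrow> act (inverse p) (act p x) = x"
  by (metis act_1 act_times inv_mult_perm(1))
lemma act_inv2[simp]: "x \<in> Q \<Longrightarrow> act p (act (inverse p) x) = x"
  by (metis act_1 act_times inv_mult_perm(2))

lemma supports_perm_Q:
  assumes x: "x \<in> Q" and S: "supports act S x"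
  shows "supports act (Perm.apply p ` S) (act p x)"
  unfolding supports_def
proof (intro allI impI)
  fix r assume fs: "\<forall>a\<in>Perm.apply p ` S. Perm.apply r a = a"
  have "\<forall>a\<in>S. Perm.apply (inverse p * r * p) a = a"
    using fs by (simp add: apply_times)
  then have e: "act (inverse p * r * p) x = x" using S unfolding supports_def by blast
  have "r * p = p * (inverse p * r * p)"
    by (simp add: mult.assoc[symmetric] inv_mult_perm)
  then have "act r (act p x) = act p (act (inverse p * r * p) x)"
    using x by (metis act_times)
  then show "act r (act p x) = act p x" using e by simp
qed

lemma supp_subset: "finite S \<Longrightarrow> supports act S x \<Longrightarrow> supp act x \<subseteq> S"
  unfolding supp_def by blast

lemma supp_remove:
  assumes x: "x \<in> Q" and S: "supports act S x" and a: "a \<notin> supp act x" and fin_S: "finite S"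
  shows "supports act (S - {a}) x"
proof (cases "a \<in> S")
  case False then show ?thesis using S by simp
next
  case True
  obtain S' where S': "finite S'" "supports act S' x" "a \<notin> S'"
    using a unfolding supp_def by blast
  show ?thesis unfolding supports_def
  proof (intro allI impI)
    fix r assume r: "\<forall>b\<in>S - {a}. Perm.apply r b = b"
    obtain c where c: "c \<notin> S \<union> S' \<union> affected r \<union> {a}"
      using fresh_ex[of "S \<union> S' \<union> affected r \<union> {a}"] S'(1) fin_S by auto
    have "\<forall>b\<in>S'. Perm.apply (Perm.swap a c) b = b" using c S'(3) by (auto intro!: apply_swap_same)
    then have xc: "act (Perm.swap a c) x = x" using S'(2) unfolding supports_def by blast
    have "supports act (Perm.apply (Perm.swap a c) ` S) x"
      using supports_perm_Q[OF x S, of "Perm.swap a c"] xc by simp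
    moreover have "\<forall>b\<in>Perm.apply (Perm.swap a c) ` S. Perm.apply r b = b"
    proof
      fix b assume "b \<in> Perm.apply (Perm.swap a c) ` S"
      then obtain y where y: "y \<in> S" "b = Perm.apply (Perm.swap a c) y" by blast
      show "Perm.apply r b = b"
      proof (cases "y = a")
        case True then show ?thesis using y c by (simp add: in_affected)
      next
        case False
        then have "y \<noteq> c" using c y by auto
        then show ?thesis using False y r by simp
      qed
    qed
    ultimately show "act r x = x" unfolding supports_def by blast
  qed
qed

lemma supp_supports: assumes x: "x \<in> Q" shows "supports act (supp act x) x" "finite (supp act x)"
proof -
  obtain S0 where S0: "finite S0" "supports act S0 x" using fin_supp_Q[OF x] unfolding fin_supp_def by blast
  have sub: "supp act x \<subseteq> S0" by (rule supp_subset[OF S0])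
  have "\<forall>D. finite D \<longrightarrow> D \<subseteq> S0 - supp act x \<longrightarrow> supports act (S0 - D) x"
  proof (intro allI impI)
    fix D :: "name set" assume "finite D" "D \<subseteq> S0 - supp act x"
    then show "supports act (S0 - D) x"
    proof (induction D rule: finite_induct)
      case empty then show ?case using S0 by simp
    next
      case (insert a D)
      then have "supports act (S0 - D - {a}) x"
        by (intro supp_remove[OF x]) (use S0 in auto)
      moreover have "S0 - D - {a} = S0 - insert a D" by auto
      ultimately show ?case by simp
    qed
  qed
  then have "supports act (S0 - (S0 - supp act x)) x" using S0 by blast
  moreover have "S0 - (S0 - supp act x) = supp act x" using sub by auto
  ultimately show "supports act (supp act x) x" by simp
  show "finite (supp act x)" using sub S0 finite_subset by blast
qed

lemma act_fix: "x \<in> Q \<Longrightarrow> (\<forall>a\<in>supp act x. Perm.apply p a = a) \<Longrightarrow> act p x = x"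
  using supp_supports(1) unfolding supports_def by blast

lemma act_agree: assumes x: "x \<in> Q" and ag: "\<forall>a\<in>supp act x. Perm.apply p a = Perm.apply r a"
  shows "act p x = act r x"
proof -
  have "\<forall>a\<in>supp act x. Perm.apply (inverse r * p) a = a"
    using ag by (simp add: apply_times)
  then have "act (inverse r * p) x = x" by (rule act_fix[OF x])
  then have "act r (act (inverse r * p) x) = act r x" by simp
  moreover have "r * (inverse r * p) = p" by (simp add: mult.assoc[symmetric] inv_mult_perm)
  ultimately show ?thesis using x by (metis act_times)
qed

lemma supp_perm: assumes x: "x \<in> Q" shows "supp act (act p x) = Perm.apply p ` supp act x"
proof
  show "supp act (act p x) \<subseteq> Perm.apply p ` supp act x"
    using supports_perm_Q[OF x supp_supports(1)[OF x]] supp_supports(2)[OF x]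
    by (intro supp_subset) auto
  have "supp act (act (inverse p) (act p x)) \<subseteq> Perm.apply (inverse p) ` supp act (act p x)"
    using supports_perm_Q[OF act_Q[OF x] supp_supports(1)[OF act_Q[OF x]]] supp_supports(2)[OF act_Q[OF x]]
    by (intro supp_subset) auto
  then have "supp act x \<subseteq> Perm.apply (inverse p) ` supp act (act p x)" using x by simp
  then show "Perm.apply p ` supp act x \<subseteq> supp act (act p x)"
    by (auto simp: image_iff)
qed

lemma finite_supp[simp]: "x \<in> Q \<Longrightarrow> finite (supp act x)"
  by (rule supp_supports(2))

lemma orbit_rep: assumes "x \<in> Q" "y \<in> Q" "nom_orbit act x = nom_orbit act y"
  shows "\<exists>p. y = act p x"
proof -
  have "y \<in> nom_orbit act y" unfolding nom_orbit_def using assms(2) by (auto intro: image_eqI[of _ _ 1])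
  then show ?thesis using assms(3) unfolding nom_orbit_def by auto
qed

definition rep :: "'q set \<Rightarrow> 'q" where
  "rep Ob = (SOME x. x \<in> Q \<and> nom_orbit act x = Ob)"

lemma rep: "y \<in> Q \<Longrightarrow> rep (nom_orbit act y) \<in> Q \<and> (\<exists>p. y = act p (rep (nom_orbit act y)))"
proof -
  assume y: "y \<in> Q"
  have "\<exists>x. x \<in> Q \<and> nom_orbit act x = nom_orbit act y" using y by blast
  then have r: "rep (nom_orbit act y) \<in> Q \<and> nom_orbit act (rep (nom_orbit act y)) = nom_orbit act y"
    unfolding rep_def by (rule someI_ex)
  then show ?thesis using orbit_rep[of "rep (nom_orbit act y)" y] y by blast
qed

lemma card_supp_perm: "x \<in> Q \<Longrightarrow> card (supp act (act p x)) = card (supp act x)"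
  by (simp add: supp_perm card_image inj_on_def apply_inj)

lemma supp_bound: "\<exists>k. \<forall>q\<in>Q. card (supp act q) \<le> k"
proof -
  let ?h = "\<lambda>Ob. card (supp act (rep Ob))"
  have "\<forall>q\<in>Q. card (supp act q) = ?h (nom_orbit act q)"
  proof
    fix q assume q: "q \<in> Q"
    then obtain p where "q = act p (rep (nom_orbit act q))" "rep (nom_orbit act q) \<in> Q" using rep by blast
    then show "card (supp act q) = ?h (nom_orbit act q)" using card_supp_perm by metis
  qed
  moreover have "finite (?h ` nom_orbit act ` Q)" using orbfin by simp
  ultimately have "\<forall>q\<in>Q. card (supp act q) \<le> Max (?h ` nom_orbit act ` Q)"
    by (metis Max_ge image_eqI)
  then show ?thesis by blast
qed

lemma finite_within: assumes N: "finite N" shows "finite {q\<in>Q. supp act q \<subseteq> N}"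
proof -
  let ?R = "rep ` nom_orbit act ` Q"
  let ?G = "\<lambda>x. (\<lambda>h. act (SOME p. \<forall>a\<in>supp act x. Perm.apply p a = h a) x) ` (PiE (supp act x) (\<lambda>_. N))"
  have "{q\<in>Q. supp act q \<subseteq> N} \<subseteq> (\<Union>x\<in>?R. ?G x)"
  proof
    fix q assume "q \<in> {q\<in>Q. supp act q \<subseteq> N}"
    then have q: "q \<in> Q" "supp act q \<subseteq> N" by auto
    define x where "x = rep (nom_orbit act q)"
    obtain p where p: "q = act p x" and xQ: "x \<in> Q" using rep[OF q(1)] unfolding x_def by blast
    define h where "h = restrict (Perm.apply p) (supp act x)"
    have "supp act q = Perm.apply p ` supp act x" using supp_perm[OF xQ, of p] p by simp
    then have "Perm.apply p ` supp act x \<subseteq> N" using q(2) by simp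
    then have hP: "h \<in> PiE (supp act x) (\<lambda>_. N)" unfolding h_def by auto
    have ex: "\<exists>r. \<forall>a\<in>supp act x. Perm.apply r a = h a" by (intro exI[of _ p]) (simp add: h_def)
    have "\<forall>a\<in>supp act x. Perm.apply (SOME r. \<forall>a\<in>supp act x. Perm.apply r a = h a) a = h a"
      by (rule someI_ex[OF ex])
    then have "act (SOME r. \<forall>a\<in>supp act x. Perm.apply r a = h a) x = act p x"
      by (intro act_agree[OF xQ]) (simp add: h_def)
    then have "q \<in> ?G x" using hP p by (auto intro!: image_eqI[of _ _ h])
    moreover have "x \<in> ?R" using q(1) x_def by blast
    ultimately show "q \<in> (\<Union>x\<in>?R. ?G x)" by blast
  qed
  moreover have "finite (\<Union>x\<in>?R. ?G x)"
  proof (intro finite_UN_I)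
    show "finite ?R" using orbfin by simp
    fix x assume "x \<in> ?R"
    then have "x \<in> Q" using rep by auto
    then show "finite (?G x)" using N by (intro finite_imageI finite_PiE) auto
  qed
  ultimately show ?thesis by (rule finite_subset)
qed

end


context ern
begin

lemma infinite_co: "finite F \<Longrightarrow> infinite (UNIV - (F::name set))"
  by (simp add: Diff_infinite_finite infinite_UNIV_nat)

lemma inj_swaps: assumes q': "q' \<in> Q" and x: "x \<in> supp act q'" and D: "D \<inter> supp act q' = {}"
  shows "inj_on (\<lambda>d. act (Perm.swap x d) q') D"
proof
  fix d1 d2 assume d: "d1 \<in> D" "d2 \<in> D" and eq: "act (Perm.swap x d1) q' = act (Perm.swap x d2) q'"
  have "Perm.apply (Perm.swap x d1) x \<in> Perm.apply (Perm.swap x d1) ` supp act q'" using x by blast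
  then have "d1 \<in> supp act (act (Perm.swap x d1) q')" using q' by (simp add: supp_perm)
  then have "d1 \<in> Perm.apply (Perm.swap x d2) ` supp act q'" using eq q' by (simp add: supp_perm)
  then obtain y where y: "y \<in> supp act q'" "d1 = Perm.apply (Perm.swap x d2) y" by blast
  have "d1 \<notin> supp act q'" "d2 \<notin> supp act q'" using d D by auto
  then show "d1 = d2" using y by (cases "y = x"; cases "y = d2") auto
qed

lemma act_swap_fix: "q \<in> Q \<Longrightarrow> x \<notin> supp act q \<Longrightarrow> d \<notin> supp act q \<Longrightarrow> act (Perm.swap x d) q = q"
  by (rule act_fix) (auto intro!: apply_swap_same)

lemma eps_supp: assumes tr: "(q, None, q') \<in> T" shows "supp act q' \<subseteq> supp act q"
proof
  fix x assume x: "x \<in> supp act q'"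
  show "x \<in> supp act q"
  proof (rule ccontr)
    assume nx: "x \<notin> supp act q"
    have q: "q \<in> Q" "q' \<in> Q" using T_sub[OF tr] by auto
    let ?D = "UNIV - (supp act q \<union> supp act q')"
    have "\<forall>d\<in>?D. (q, None, act (Perm.swap x d) q') \<in> T"
    proof
      fix d assume "d \<in> ?D"
      then have "act (Perm.swap x d) q = q" using act_swap_fix[OF q(1) nx] by auto
      then show "(q, None, act (Perm.swap x d) q') \<in> T" using T_eqvt[OF tr, of "Perm.swap x d"] by simp
    qed
    then have "(\<lambda>d. act (Perm.swap x d) q') ` ?D \<subseteq> {q'. (q, None, q') \<in> T}" by blast
    moreover have "infinite ((\<lambda>d. act (Perm.swap x d) q') ` ?D)"
    proof -
      have inj: "inj_on (\<lambda>d. act (Perm.swap x d) q') ?D" by (rule inj_swaps[OF q(2) x]) auto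
      have "infinite ?D" by (rule infinite_co) (simp add: q)
      then show ?thesis using finite_image_iff[OF inj] by simp
    qed
    ultimately show False using fin_eps[OF q(1)] finite_subset by blast
  qed
qed

lemma plain_supp: assumes tr: "(q, Some (Plain a), q') \<in> T" shows "a \<in> supp act q" "supp act q' \<subseteq> supp act q"
proof -
  have q: "q \<in> Q" "q' \<in> Q" using T_sub[OF tr] by auto
  show a: "a \<in> supp act q"
  proof (rule ccontr)
    assume na: "a \<notin> supp act q"
    let ?D = "UNIV - supp act q"
    have "\<forall>d\<in>?D. (q, Some (Plain d), act (Perm.swap a d) q') \<in> T"
    proof
      fix d assume "d \<in> ?D"
      then have "act (Perm.swap a d) q = q" using act_swap_fix[OF q(1) na] by auto
      then show "(q, Some (Plain d), act (Perm.swap a d) q') \<in> T" using T_eqvt[OF tr, of "Perm.swap a d"] by simp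
    qed
    then have "?D \<subseteq> fst ` {(a, q'). (q, Some (Plain a), q') \<in> T}"
      by (auto intro!: image_eqI[of _ fst])
    moreover have "infinite ?D" using infinite_co q by simp
    ultimately show False using fin_plain[OF q(1)] by (meson finite_imageI finite_subset)
  qed
  show "supp act q' \<subseteq> supp act q"
  proof
    fix x assume x: "x \<in> supp act q'"
    show "x \<in> supp act q"
    proof (rule ccontr)
      assume nx: "x \<notin> supp act q"
      let ?D = "UNIV - (supp act q \<union> supp act q')"
      have "\<forall>d\<in>?D. (q, Some (Plain a), act (Perm.swap x d) q') \<in> T"
      proof
        fix d assume d: "d \<in> ?D"
        then have "act (Perm.swap x d) q = q" using act_swap_fix[OF q(1) nx] by auto
        moreover have "Perm.apply (Perm.swap x d) a = a" using a nx d by (auto intro!: apply_swap_same)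
        ultimately show "(q, Some (Plain a), act (Perm.swap x d) q') \<in> T"
          using T_eqvt[OF tr, of "Perm.swap x d"] by simp
      qed
      then have "(\<lambda>d. act (Perm.swap x d) q') ` ?D \<subseteq> snd ` {(a, q'). (q, Some (Plain a), q') \<in> T}"
        by (auto intro!: image_eqI[of _ snd])
    moreover have "infinite ((\<lambda>d. act (Perm.swap x d) q') ` ?D)"
    proof -
      have inj: "inj_on (\<lambda>d. act (Perm.swap x d) q') ?D" by (rule inj_swaps[OF q(2) x]) auto
      have "infinite ?D" by (rule infinite_co) (simp add: q)
      then show ?thesis using finite_image_iff[OF inj] by simp
    qed
      ultimately show False using fin_plain[OF q(1)] by (meson finite_imageI finite_subset)
    qed
  qed
qed

lemma abs_refl_Q: "y \<in> Q \<Longrightarrow> abs_eq act c y c y"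
proof -
  assume y: "y \<in> Q"
  obtain e where "e \<notin> supp act y \<union> {c}" using fresh_ex[of "supp act y \<union> {c}"] y by auto
  then show ?thesis unfolding abs_eq_def by auto
qed

lemma abs_same_Q: "y1 \<in> Q \<Longrightarrow> y2 \<in> Q \<Longrightarrow> abs_eq act c y1 c y2 \<Longrightarrow> y1 = y2"
proof -
  assume y: "y1 \<in> Q" "y2 \<in> Q" "abs_eq act c y1 c y2"
  then obtain e where "act (Perm.swap c e) y1 = act (Perm.swap c e) y2" unfolding abs_eq_def by blast
  then have "act (inverse (Perm.swap c e)) (act (Perm.swap c e) y1) = act (inverse (Perm.swap c e)) (act (Perm.swap c e) y2)"
    by (simp only:)
  then show ?thesis using y(1,2) by (simp only: act_inv)
qed

lemma bar_supp: assumes tr: "(q, Some (Bar c), q') \<in> T" shows "supp act q' \<subseteq> insert c (supp act q)"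
proof
  fix x assume x: "x \<in> supp act q'"
  have q: "q \<in> Q" "q' \<in> Q" using T_sub[OF tr] by auto
  show "x \<in> insert c (supp act q)"
  proof (rule ccontr)
    assume nx: "x \<notin> insert c (supp act q)"
    let ?D = "UNIV - (insert c (supp act q \<union> supp act q'))"
    let ?g = "\<lambda>d. act (Perm.swap x d) q'"
    have tD: "\<forall>d\<in>?D. (q, Some (Bar c), ?g d) \<in> T"
    proof
      fix d assume d: "d \<in> ?D"
      then have "act (Perm.swap x d) q = q" using act_swap_fix[OF q(1)] nx by auto
      moreover have "Perm.apply (Perm.swap x d) c = c" using nx d by (auto intro!: apply_swap_same)
      ultimately show "(q, Some (Bar c), ?g d) \<in> T"
        using T_eqvt[OF tr, of "Perm.swap x d"] by simp
    qed
    have injg: "inj_on ?g ?D" by (rule inj_swaps[OF q(2) x]) auto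
    have "inj_on (\<lambda>d. abs_class act Q c (?g d)) ?D"
    proof
      fix d1 d2 assume d: "d1 \<in> ?D" "d2 \<in> ?D" and eq: "abs_class act Q c (?g d1) = abs_class act Q c (?g d2)"
      have "(c, ?g d2) \<in> abs_class act Q c (?g d2)" unfolding abs_class_def using q abs_refl_Q by auto
      then have "abs_eq act c (?g d1) c (?g d2)" using eq unfolding abs_class_def by auto
      then have "?g d1 = ?g d2" using abs_same_Q q by auto
      then show "d1 = d2" using injg d by (meson inj_onD)
    qed
    then have "infinite ((\<lambda>d. abs_class act Q c (?g d)) ` ?D)"
      using infinite_co[of "insert c (supp act q \<union> supp act q')"] q by (auto simp: finite_image_iff)
    moreover have "(\<lambda>d. abs_class act Q c (?g d)) ` ?D \<subseteq>
        (\<lambda>(a, q'). abs_class act Q a q') ` {(a, q'). (q, Some (Bar a), q') \<in> T}"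
    proof
      fix z assume "z \<in> (\<lambda>d. abs_class act Q c (?g d)) ` ?D"
      then obtain d where "d \<in> ?D" "z = abs_class act Q c (?g d)" by blast
      then show "z \<in> (\<lambda>(a, q'). abs_class act Q a q') ` {(a, q'). (q, Some (Bar a), q') \<in> T}"
        using tD by (intro image_eqI[of _ _ "(c, ?g d)"]) auto
    qed
    ultimately show False using fin_bar[OF q(1)] finite_subset by blast
  qed
qed

subsection \<open>Runs\<close>

lemma steps_Q: "steps T q w r \<Longrightarrow> q \<in> Q \<Longrightarrow> r \<in> Q"
  by (induction rule: steps.induct) (auto dest: T_sub)

lemma steps_eqvt: "steps T q w r \<Longrightarrow> steps T (act p q) (perm_bs p w) (act p r)"
proof (induction rule: steps.induct)
  case (steps_nil q) then show ?case by (simp add: steps.steps_nil)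
next
  case (steps_eps q q' w q'') then show ?case using T_eqvt[of q None q' p] by (auto intro: steps.steps_eps)
next
  case (steps_letter q \<sigma> q' w q'') then show ?case using T_eqvt[of q "Some \<sigma>" q' p] by (auto intro: steps.steps_letter)
qed

lemma steps_Nil_supp: "steps T q w r \<Longrightarrow> w = [] \<Longrightarrow> supp act r \<subseteq> supp act q"
  by (induction rule: steps.induct) (auto dest: eps_supp)

lemma steps_Cons: "steps T q (x # v) r \<longleftrightarrow> (\<exists>p0 p'. steps T q [] p0 \<and> (p0, Some x, p') \<in> T \<and> steps T p' v r)"
proof
  have "steps T q w r \<Longrightarrow> w = x # v \<Longrightarrow> (\<exists>p0 p'. steps T q [] p0 \<and> (p0, Some x, p') \<in> T \<and> steps T p' v r)" for w
  proof (induction rule: steps.induct)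
    case (steps_eps q q' w q'')
    then show ?case by (meson steps.steps_eps)
  next
    case (steps_letter q \<sigma> q' w q'')
    then show ?case by (auto intro: steps.steps_nil)
  qed auto
  then show "steps T q (x # v) r \<Longrightarrow> (\<exists>p0 p'. steps T q [] p0 \<and> (p0, Some x, p') \<in> T \<and> steps T p' v r)" by blast
next
  assume "\<exists>p0 p'. steps T q [] p0 \<and> (p0, Some x, p') \<in> T \<and> steps T p' v r"
  then obtain p0 p' where a: "steps T q [] p0" "(p0, Some x, p') \<in> T" "steps T p' v r" by blast
  have "steps T q w p0 \<Longrightarrow> w = [] \<Longrightarrow> (p0, Some x, p') \<in> T \<Longrightarrow> steps T p' v r \<Longrightarrow> steps T q (x # v) r" for w p0
    by (induction rule: steps.induct) (auto intro: steps.intros)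
  then show "steps T q (x # v) r" using a by blast
qed

definition eclos :: "'q \<Rightarrow> 'q set" where "eclos q = {r. steps T q [] r}"

definition Topq :: "'q \<Rightarrow> bool" where "Topq q \<longleftrightarrow> (\<exists>r\<in>eclos q. f r = FTop)"

definition Lang :: "'q \<Rightarrow> bletter list set" where
  "Lang q = {w. (\<exists>r. steps T q w r \<and> f r = F1) \<or> (\<exists>v u r. w = v @ u \<and> steps T q v r \<and> f r = FTop)}"

definition aLang :: "'q \<Rightarrow> bletter list set" where
  "aLang q = {w. \<exists>w'. alpha_eq w w' \<and> w' \<in> Lang q}"

lemma Lang_top: "Topq q \<Longrightarrow> w \<in> Lang q"
proof -
  assume "Topq q"
  then obtain r where r: "steps T q [] r" "f r = FTop" unfolding Topq_def eclos_def by blast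
  show ?thesis unfolding Lang_def
    by (rule CollectI, rule disjI2, rule exI[of _ "[]"], rule exI[of _ w], rule exI[of _ r]) (simp add: r)
qed

lemma Lang_Nil: "[] \<in> Lang q \<longleftrightarrow> (\<exists>r\<in>eclos q. f r = F1 \<or> f r = FTop)"
  unfolding Lang_def eclos_def by auto

lemma Lang_Cons: "x # v \<in> Lang q \<longleftrightarrow> Topq q \<or> (\<exists>p0\<in>eclos q. \<exists>p'. (p0, Some x, p') \<in> T \<and> v \<in> Lang p')"
proof
  assume "x # v \<in> Lang q"
  then consider r where "steps T q (x # v) r" "f r = F1"
    | v0 u r where "x # v = v0 @ u" "steps T q v0 r" "f r = FTop" unfolding Lang_def by blast
  then show "Topq q \<or> (\<exists>p0\<in>eclos q. \<exists>p'. (p0, Some x, p') \<in> T \<and> v \<in> Lang p')"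
  proof cases
    case 1 then show ?thesis unfolding steps_Cons eclos_def Lang_def by blast
  next
    case (2 v0 u r)
    show ?thesis
    proof (cases v0)
      case Nil then show ?thesis using 2 unfolding Topq_def eclos_def by auto
    next
      case (Cons y v1)
      then have "y = x" "v = v1 @ u" using 2 by auto
      then obtain p0 p' where "steps T q [] p0" "(p0, Some x, p') \<in> T" "steps T p' v1 r"
        using 2 Cons steps_Cons by blast
      then show ?thesis unfolding eclos_def Lang_def using \<open>v = v1 @ u\<close> 2 by blast
    qed
  qed
next
  assume "Topq q \<or> (\<exists>p0\<in>eclos q. \<exists>p'. (p0, Some x, p') \<in> T \<and> v \<in> Lang p')"
  then show "x # v \<in> Lang q"
  proof
    assume "Topq q" then show ?thesis by (rule Lang_top)
  next
    assume "\<exists>p0\<in>eclos q. \<exists>p'. (p0, Some x, p') \<in> T \<and> v \<in> Lang p'"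
    then obtain p0 p' where a: "steps T q [] p0" "(p0, Some x, p') \<in> T" "v \<in> Lang p'"
      unfolding eclos_def by blast
    from a(3) consider r where "steps T p' v r" "f r = F1"
      | v0 u r where "v = v0 @ u" "steps T p' v0 r" "f r = FTop" unfolding Lang_def by blast
    then show ?thesis
    proof cases
      case 1 then show ?thesis using a steps_Cons unfolding Lang_def by blast
    next
      case (2 v0 u r)
      then have st: "steps T q (x # v0) r" using a steps_Cons by blast
      show ?thesis unfolding Lang_def
        by (rule CollectI, rule disjI2, rule exI[of _ "x # v0"], rule exI[of _ u], rule exI[of _ r]) (simp add: st 2)
    qed
  qed
qed

lemma Lang_eqvt: "q \<in> Q \<Longrightarrow> w \<in> Lang q \<Longrightarrow> perm_bs p w \<in> Lang (act p q)"
proof -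
  assume q: "q \<in> Q" and w: "w \<in> Lang q"
  from w consider r where "steps T q w r" "f r = F1"
      | v u r where "w = v @ u" "steps T q v r" "f r = FTop" unfolding Lang_def by blast
  then show ?thesis
  proof cases
    case 1 then show ?thesis using steps_eqvt[OF 1(1), of p] f_inv[OF steps_Q[OF 1(1) q]]
      unfolding Lang_def by auto
  next
    case (2 v u r)
    have st: "steps T (act p q) (perm_bs p v) (act p r)" by (rule steps_eqvt[OF 2(2)])
    have fr: "f (act p r) = FTop" using f_inv[OF steps_Q[OF 2(2) q]] 2 by simp
    show ?thesis unfolding Lang_def
      by (rule CollectI, rule disjI2, rule exI[of _ "perm_bs p v"], rule exI[of _ "perm_bs p u"], rule exI[of _ "act p r"])
        (simp add: st fr 2)
  qed
qed

lemma aLang_eqvt: "q \<in> Q \<Longrightarrow> w \<in> aLang q \<Longrightarrow> perm_bs p w \<in> aLang (act p q)"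
  unfolding aLang_def using alpha_perm Lang_eqvt by blast

lemma aLang_alpha: "alpha_eq w w' \<Longrightarrow> w' \<in> aLang q \<Longrightarrow> w \<in> aLang q"
  unfolding aLang_def using alpha_trans by blast

lemma Lang_aLang: "w \<in> Lang q \<Longrightarrow> w \<in> aLang q"
  unfolding aLang_def using alpha_refl by blast

lemma aLang_Nil: "[] \<in> aLang q \<longleftrightarrow> [] \<in> Lang q"
  unfolding aLang_def using alpha_Nil alpha_refl by blast

lemma aLang_top: "Topq q \<Longrightarrow> w \<in> aLang q"
  using Lang_top Lang_aLang by blast

lemma aLang_Plain: "Plain a # v \<in> aLang q \<longleftrightarrow> Topq q \<or> (\<exists>p0\<in>eclos q. \<exists>p'. (p0, Some (Plain a), p') \<in> T \<and> v \<in> aLang p')"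
proof
  assume "Plain a # v \<in> aLang q"
  then obtain w' where "alpha_eq (Plain a # v) w'" "w' \<in> Lang q" unfolding aLang_def by blast
  then obtain v' where "w' = Plain a # v'" "alpha_eq v v'" "Plain a # v' \<in> Lang q" using alpha_Plain by blast
  then show "Topq q \<or> (\<exists>p0\<in>eclos q. \<exists>p'. (p0, Some (Plain a), p') \<in> T \<and> v \<in> aLang p')"
    unfolding Lang_Cons aLang_def by blast
next
  assume "Topq q \<or> (\<exists>p0\<in>eclos q. \<exists>p'. (p0, Some (Plain a), p') \<in> T \<and> v \<in> aLang p')"
  then show "Plain a # v \<in> aLang q"
  proof
    assume "Topq q" then show ?thesis by (rule aLang_top)
  next
    assume "\<exists>p0\<in>eclos q. \<exists>p'. (p0, Some (Plain a), p') \<in> T \<and> v \<in> aLang p'"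
    then obtain p0 p' v' where "p0 \<in> eclos q" "(p0, Some (Plain a), p') \<in> T" "alpha_eq v v'" "v' \<in> Lang p'"
      unfolding aLang_def by blast
    then have "Plain a # v' \<in> Lang q" "alpha_eq (Plain a # v) (Plain a # v')"
      unfolding Lang_Cons by (auto intro: alpha_cons)
    then show ?thesis unfolding aLang_def by blast
  qed
qed

lemma aLang_Bar_D: "Bar b # v \<in> aLang q \<Longrightarrow> Topq q \<or> (\<exists>p0\<in>eclos q. \<exists>c p' u. (p0, Some (Bar c), p') \<in> T \<and> u \<in> Lang p'
     \<and> alpha_eq (Bar b # v) (Bar c # u))"
proof -
  assume "Bar b # v \<in> aLang q"
  then obtain w' where w': "alpha_eq (Bar b # v) w'" "w' \<in> Lang q" unfolding aLang_def by blast
  then obtain c u where cu: "w' = Bar c # u" using alpha_Bar by blast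
  then show ?thesis using w' Lang_Cons[of "Bar c" u q] by blast
qed

lemma aLang_Bar_I: "p0 \<in> eclos q \<Longrightarrow> (p0, Some (Bar c), p') \<in> T \<Longrightarrow> y \<in> aLang p' \<Longrightarrow> Bar c # y \<in> aLang q"
proof -
  assume a: "p0 \<in> eclos q" "(p0, Some (Bar c), p') \<in> T" "y \<in> aLang p'"
  then obtain y' where "alpha_eq y y'" "y' \<in> Lang p'" unfolding aLang_def by blast
  then have "Bar c # y' \<in> Lang q" "alpha_eq (Bar c # y) (Bar c # y')"
    using a unfolding Lang_Cons by (auto intro: alpha_cons)
  then show ?thesis unfolding aLang_def by blast
qed

lemma eclos_Q: "q \<in> Q \<Longrightarrow> r \<in> eclos q \<Longrightarrow> r \<in> Q"
  unfolding eclos_def using steps_Q by blast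

lemma eclos_supp: "r \<in> eclos q \<Longrightarrow> supp act r \<subseteq> supp act q"
  unfolding eclos_def using steps_Nil_supp by blast

lemma eclos_refl: "q \<in> eclos q"
  unfolding eclos_def by (simp add: steps.steps_nil)

end


context ern
begin

definition kb :: nat where "kb = (SOME k. \<forall>q\<in>Q. card (supp act q) \<le> k)"
definition Nn :: "name set" where "Nn = {..<Suc kb}"

lemma kb: "q \<in> Q \<Longrightarrow> card (supp act q) \<le> kb"
  using someI_ex[OF supp_bound] unfolding kb_def by blast

lemma finite_Nn[simp]: "finite Nn" by (simp add: Nn_def)

lemma exN: assumes q: "q \<in> Q" shows "\<exists>c\<in>Nn. c \<notin> supp act q"
proof (rule ccontr)
  assume "\<not> (\<exists>c\<in>Nn. c \<notin> supp act q)"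
  then have "Nn \<subseteq> supp act q" by blast
  then have "card Nn \<le> card (supp act q)" using q by (simp add: card_mono)
  then show False using kb[OF q] by (simp add: Nn_def)
qed

definition V :: "'q set" where "V = {q\<in>Q. supp act q \<subseteq> Nn}"

lemma finite_V: "finite V" unfolding V_def by (rule finite_within) simp

lemma V_Q: "q \<in> V \<Longrightarrow> q \<in> Q" unfolding V_def by blast
lemma V_supp: "q \<in> V \<Longrightarrow> supp act q \<subseteq> Nn" unfolding V_def by blast

definition ix :: "'q \<Rightarrow> nat" where "ix = (SOME g. inj_on g V)"

lemma inj_ix: "inj_on ix V"
proof -
  have "\<exists>g::'q \<Rightarrow> nat. inj_on g V" using finite_imp_inj_to_nat_seg[OF finite_V] by blast
  then show ?thesis unfolding ix_def by (rule someI_ex)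
qed

definition TR :: "'q \<Rightarrow> (bletter \<times> 'q) set" where
  "TR q = {(x, p). \<exists>p0\<in>eclos q. (p0, Some x, p) \<in> T \<and> p \<in> V \<and> (\<forall>c. x = Bar c \<longrightarrow> c \<in> Nn \<and> c \<notin> supp act q)}"

lemma TR_V: "(x, p) \<in> TR q \<Longrightarrow> p \<in> V" unfolding TR_def by blast

lemma finite_TR: assumes q: "q \<in> V" shows "finite (TR q)"
proof -
  have "TR q \<subseteq> (Plain ` Nn \<union> Bar ` Nn) \<times> V"
  proof
    fix z assume "z \<in> TR q"
    then obtain x p p0 where z: "z = (x, p)" "p0 \<in> eclos q" "(p0, Some x, p) \<in> T" "p \<in> V"
      "\<forall>c. x = Bar c \<longrightarrow> c \<in> Nn \<and> c \<notin> supp act q" unfolding TR_def by blast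
    have "x \<in> Plain ` Nn \<union> Bar ` Nn"
    proof (cases x)
      case (Plain a)
      then have "a \<in> supp act p0" using plain_supp z by blast
      then have "a \<in> Nn" using eclos_supp[OF z(2)] V_supp[OF q] by blast
      then show ?thesis using Plain by blast
    next
      case (Bar c) then show ?thesis using z by blast
    qed
    then show "z \<in> (Plain ` Nn \<union> Bar ` Nn) \<times> V" using z by blast
  qed
  moreover have "finite ((Plain ` Nn \<union> Bar ` Nn) \<times> V)" using finite_V by simp
  ultimately show ?thesis by (rule finite_subset)
qed

definition tlist :: "'q \<Rightarrow> (bletter \<times> 'q) list" where "tlist q = (SOME xs. set xs = TR q)"
definition slist :: "'q \<Rightarrow> name list" where "slist q = (SOME xs. set xs = supp act q)"

lemma set_tlist: "q \<in> V \<Longrightarrow> set (tlist q) = TR q"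
  unfolding tlist_def by (rule someI_ex) (rule finite_list[OF finite_TR])

lemma set_slist: "q \<in> Q \<Longrightarrow> set (slist q) = supp act q"
  unfolding slist_def by (rule someI_ex) (rule finite_list[OF finite_supp])

definition acc :: "'q \<Rightarrow> form" where
  "acc q = (if Topq q then TopF else if (\<exists>r\<in>eclos q. f r = F1) then Eps else FalseF)"

definition dummy :: "'q \<Rightarrow> form" where
  "dummy q = disjs (map (\<lambda>a. Conj FalseF (Dia (Plain a) FalseF)) (slist q))"

definition body :: "'q \<Rightarrow> ('q \<Rightarrow> form) \<Rightarrow> form" where
  "body q g = Disj (acc q) (Disj (dummy q) (disjs (map (\<lambda>(x, p). Dia x (g p)) (tlist q))))"

fun F :: "nat \<Rightarrow> 'q list \<Rightarrow> 'q \<Rightarrow> form" where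
  "F 0 path q = FalseF"
| "F (Suc n) path q = Mu (ix q) (body q (\<lambda>p. if p \<in> set (q # path) then Var (ix p) (supp act p) else F n (q # path) p))"

lemma fv_acc[simp]: "fv (acc q) = {}" by (simp add: acc_def TopF_def FalseF_def)
lemma fv_dummy[simp]: "fv (dummy q) = {}" by (simp add: dummy_def fv_disjs FalseF_def)
lemma names_acc[simp]: "names_form (acc q) = {}" by (simp add: acc_def TopF_def FalseF_def)
lemma FN_acc[simp]: "FN_form (acc q) = {}" by (simp add: acc_def TopF_def FalseF_def)
lemma names_dummy: "q \<in> Q \<Longrightarrow> names_form (dummy q) = supp act q"
  by (simp add: dummy_def names_disjs FalseF_def set_slist)
lemma FN_dummy: "q \<in> Q \<Longrightarrow> FN_form (dummy q) = supp act q"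
  by (simp add: dummy_def FN_disjs FalseF_def set_slist)
lemma sat_acc: "sat S w (acc q) \<longleftrightarrow> Topq q \<or> (w = [] \<and> (\<exists>r\<in>eclos q. f r = F1))"
  by (simp add: acc_def)
lemma sat_dummy[simp]: "\<not> sat S w (dummy q)"
  by (simp add: dummy_def sat_disjs)

lemma sat_body: "q \<in> V \<Longrightarrow> sat S w (body q g) \<longleftrightarrow> sat S w (acc q) \<or> (\<exists>(x, p)\<in>TR q. sat S w (Dia x (g p)))"
  by (auto simp: body_def sat_disjs set_tlist)

lemma map_ssubst_aux: "map (ssubst \<sigma>) (map (\<lambda>(x, p). Dia x (g p)) xs) = map (\<lambda>(x, p). Dia x (ssubst \<sigma> (g p))) xs"
  by (induction xs) auto
lemma map_subst_aux: "map (subst X t) (map (\<lambda>(x, p). Dia x (g p)) xs) = map (\<lambda>(x, p). Dia x (subst X t (g p))) xs"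
  by (induction xs) auto

lemma ssubst_body: "ssubst \<sigma> (body q g) = body q (\<lambda>p. ssubst \<sigma> (g p))"
proof -
  have "ssubst \<sigma> (acc q) = acc q" "ssubst \<sigma> (dummy q) = dummy q" by (simp_all add: ssubst_id)
  then show ?thesis by (simp only: body_def ssubst.simps ssubst_disjs map_ssubst_aux)
qed

lemma subst_body: "subst X t (body q g) = body q (\<lambda>p. subst X t (g p))"
proof -
  have "subst X t (acc q) = acc q" "subst X t (dummy q) = dummy q" by (simp_all add: subst_fresh)
  then show ?thesis by (simp only: body_def subst.simps subst_disjs map_subst_aux)
qed

lemma fv_body: "q \<in> V \<Longrightarrow> fv (body q g) = (\<Union>(x, p)\<in>TR q. fv (g p))"
  by (auto simp: body_def fv_disjs set_tlist)

lemma names_body: "q \<in> V \<Longrightarrow> names_form (body q g) = supp act q \<union> (\<Union>(x, p)\<in>TR q. insert (nm x) (names_form (g p)))"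
  by (auto simp: body_def names_disjs set_tlist names_dummy V_Q)

lemma FN_Dia: "FN_form (Dia x \<phi>) = (case x of Plain a \<Rightarrow> insert a (FN_form \<phi>) | Bar a \<Rightarrow> FN_form \<phi> - {a})"
  by (cases x) auto

lemma FN_body: "q \<in> V \<Longrightarrow> FN_form (body q g) = supp act q \<union> (\<Union>(x, p)\<in>TR q. FN_form (Dia x (g p)))"
  by (auto simp: body_def FN_disjs set_tlist FN_dummy V_Q)

lemma guarded_body: "q \<in> V \<Longrightarrow> guarded (body q g) \<longleftrightarrow> (\<forall>(x, p)\<in>TR q. guarded (g p))"
  by (auto simp: body_def guarded_disjs set_tlist acc_def TopF_def FalseF_def dummy_def)

lemma unguarded_body: "q \<in> V \<Longrightarrow> \<not> unguarded X (body q g)"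
  by (auto simp: body_def unguarded_disjs set_tlist acc_def TopF_def FalseF_def dummy_def)

lemma wa_body: "q \<in> V \<Longrightarrow> well_annotated \<Gamma> (body q g) \<longleftrightarrow> (\<forall>(x, p)\<in>TR q. well_annotated \<Gamma> (g p))"
  by (auto simp: body_def wa_disjs set_tlist acc_def TopF_def FalseF_def dummy_def)

lemma TR_supp: assumes q: "q \<in> V" and tr: "(x, p) \<in> TR q" and that: "FN_form \<phi> \<subseteq> supp act p"
  shows "FN_form (Dia x \<phi>) \<subseteq> supp act q"
proof -
  obtain p0 where p0: "p0 \<in> eclos q" "(p0, Some x, p) \<in> T" using tr unfolding TR_def by blast
  have sp0: "supp act p0 \<subseteq> supp act q" by (rule eclos_supp[OF p0(1)])
  show ?thesis
  proof (cases x)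
    case (Plain a)
    then show ?thesis using plain_supp[of p0 a p] p0 sp0 that by auto
  next
    case (Bar c)
    then show ?thesis using bar_supp[of p0 c p] p0 sp0 that by auto
  qed
qed

lemma F_props: "q \<in> V \<Longrightarrow> fv (F n path q) \<subseteq> ix ` set path \<and> finite (names_form (F n path q))
   \<and> FN_form (F n path q) \<subseteq> supp act q \<and> guarded (F n path q)"
proof (induction n arbitrary: path q)
  case 0 then show ?case by (simp add: FalseF_def)
next
  case (Suc n)
  let ?g = "\<lambda>p. if p \<in> set (q # path) then Var (ix p) (supp act p) else F n (q # path) p"
  have gp: "\<forall>(x, p)\<in>TR q. fv (?g p) \<subseteq> ix ` set (q # path) \<and> finite (names_form (?g p))
     \<and> FN_form (?g p) \<subseteq> supp act p \<and> guarded (?g p)"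
  proof (intro ballI, clarify)
    fix x p assume "(x, p) \<in> TR q"
    then have p: "p \<in> V" by (rule TR_V)
    show "fv (?g p) \<subseteq> ix ` set (q # path) \<and> finite (names_form (?g p))
     \<and> FN_form (?g p) \<subseteq> supp act p \<and> guarded (?g p)"
      using Suc.IH[OF p, of "q # path"] p V_Q by (cases "p \<in> set (q # path)") auto
  qed
  have fv: "fv (body q ?g) \<subseteq> ix ` set (q # path)"
    using gp fv_body[OF Suc.prems] by auto
  have nm: "finite (names_form (body q ?g))"
    using gp names_body[OF Suc.prems] finite_TR[OF Suc.prems] finite_supp V_Q[OF Suc.prems] by auto
  have FN: "FN_form (body q ?g) \<subseteq> supp act q"
    using gp FN_body[OF Suc.prems] TR_supp[OF Suc.prems] by fastforce
  have gd: "guarded (body q ?g)" using gp guarded_body[OF Suc.prems] by auto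
  show ?case using fv nm FN gd unguarded_body[OF Suc.prems] by auto
qed

end


context ern
begin

definition Good :: "nat \<Rightarrow> form \<Rightarrow> 'q \<Rightarrow> bool" where
  "Good m \<psi> p \<longleftrightarrow> finite (names_form \<psi>) \<and> (\<forall>S w. length w < m \<longrightarrow> (sat S w \<psi> \<longleftrightarrow> w \<in> aLang p))"

lemma abs_swap_Q: assumes y: "y \<in> Q" and c: "c \<notin> supp act y \<or> c = c0"
  shows "abs_eq act c0 y c (act (Perm.swap c0 c) y)"
proof -
  obtain e where e: "e \<notin> supp act y \<union> {c0, c}" using fresh_ex[of "supp act y \<union> {c0, c}"] y by auto
  have "act (Perm.swap c e) (act (Perm.swap c0 c) y) = act (Perm.swap c e * Perm.swap c0 c) y"
    using y by (simp add: act_times)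
  also have "\<dots> = act (Perm.swap c0 e) y"
  proof (rule act_agree[OF y], intro ballI)
    fix x assume x: "x \<in> supp act y"
    then have "x \<noteq> e" using e by auto
    then show "Perm.apply (Perm.swap c e * Perm.swap c0 c) x = Perm.apply (Perm.swap c0 e) x"
      using c x by (cases "x = c0"; cases "x = c") (auto simp: apply_times)
  qed
  finally have eq: "act (Perm.swap c0 e) y = act (Perm.swap c e) (act (Perm.swap c0 c) y)" by simp
  have "e \<notin> supp act (act (Perm.swap c0 c) y)" using e y by (auto simp: supp_perm)
  then show ?thesis unfolding abs_eq_def using e eq by (intro exI[of _ e]) auto
qed

lemma fwd:
  assumes q: "q \<in> V" and p0: "p0 \<in> eclos q" and tr: "(p0, Some (Bar c), p) \<in> T" and cq: "c \<notin> supp act q"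
    and good: "Good m \<psi> p" and sat: "sat S (Bar b # v) (Dia (Bar c) \<psi>)" and len: "length v < m"
  shows "Bar b # v \<in> aLang q"
proof -
  have fin: "finite (names_form \<psi>)" and gd: "\<forall>S w. length w < m \<longrightarrow> (sat S w \<psi> \<longleftrightarrow> w \<in> aLang p)"
    using good unfolding Good_def by auto
  obtain b' v' \<psi>' where al: "alpha_eq (Bar b # v) (Bar b' # v')" and ab: "abs_eq perm_form c \<psi> b' \<psi>'"
    and st: "sat S v' \<psi>'" using sat unfolding sat_DiaB_iff by blast
  have psi': "\<psi>' = perm_form (Perm.swap c b') \<psi>" and b'c: "b' = c \<or> b' \<notin> names_form \<psi>"
    using abs_form_inv[OF fin ab] by auto
  have lv': "length v' < m" using alpha_length[OF al] len by simp
  have qQ: "q \<in> Q" by (rule V_Q[OF q])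
  obtain b'' where b'': "b'' \<notin> names_bs v' \<union> names_form \<psi> \<union> supp act q \<union> {c, b'}"
    using fresh_ex[of "names_bs v' \<union> names_form \<psi> \<union> supp act q \<union> {c, b'}"] fin qQ by auto
  have "sat S (perm_bs (Perm.swap b' b'') v') (perm_form (Perm.swap b' b'') \<psi>')"
    by (rule sat_eqvt[OF st])
  moreover have "perm_form (Perm.swap b' b'') \<psi>' = perm_form (Perm.swap c b'') \<psi>"
  proof (cases "b' = c")
    case True then show ?thesis using psi' by simp
  next
    case False
    then have "b' \<notin> names_form \<psi>" using b'c by simp
    then have "perm_form (Perm.swap b'' b') (perm_form (Perm.swap c b') \<psi>) = perm_form (Perm.swap c b'') \<psi>"
      using b'' by (intro perm_form_swap_chain) auto
    then show ?thesis using psi' by (simp add: swap_sym)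
  qed
  ultimately have "sat S (perm_bs (Perm.swap b' b'') v') (perm_form (Perm.swap c b'') \<psi>)" by simp
  then have "sat S (perm_bs (Perm.swap c b'') (perm_bs (Perm.swap b' b'') v')) \<psi>"
    using sat_eqvt_iff[of S "Perm.swap c b''" "perm_bs (Perm.swap c b'') (perm_bs (Perm.swap b' b'') v')" \<psi>]
    by simp
  then have y: "perm_bs (Perm.swap c b'') (perm_bs (Perm.swap b' b'') v') \<in> aLang p"
    using gd lv' by simp
  have "Bar c # perm_bs (Perm.swap c b'') (perm_bs (Perm.swap b' b'') v') \<in> aLang q"
    by (rule aLang_Bar_I[OF p0 tr y])
  then have "perm_bs (Perm.swap c b'') (Bar c # perm_bs (Perm.swap c b'') (perm_bs (Perm.swap b' b'') v'))
     \<in> aLang (act (Perm.swap c b'') q)" by (rule aLang_eqvt[OF qQ])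
  moreover have "act (Perm.swap c b'') q = q" using act_swap_fix[OF qQ cq] b'' by auto
  ultimately have "Bar b'' # perm_bs (Perm.swap b' b'') v' \<in> aLang q" by simp
  moreover have "alpha_eq (Bar b' # v') (Bar b'' # perm_bs (Perm.swap b' b'') v')"
    using b'' by (intro alpha_rename) auto
  ultimately show ?thesis using al aLang_alpha alpha_trans by blast
qed

lemma bwd:
  assumes q: "q \<in> V" and p0: "p0 \<in> eclos q" and tr: "(p0, Some (Bar c0), p0') \<in> T" and u: "u \<in> Lang p0'"
    and al: "alpha_eq (Bar b # v) (Bar c0 # u)" and len: "length v < m"
    and good: "\<forall>(x, p)\<in>TR q. Good m (g p) p"
  shows "\<exists>(x, p)\<in>TR q. sat S (Bar b # v) (Dia x (g p))"
proof -
  have qQ: "q \<in> Q" by (rule V_Q[OF q])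
  have p0Q: "p0 \<in> Q" and p0'Q: "p0' \<in> Q" using T_sub[OF tr] by auto
  obtain c where cN: "c \<in> Nn" and cq: "c \<notin> supp act q" using exN[OF qQ] by blast
  have sp0': "supp act p0' \<subseteq> insert c0 (supp act q)"
    using bar_supp[OF tr] eclos_supp[OF p0] by blast
  have cp0': "c \<notin> supp act p0' \<or> c = c0" using sp0' cq by blast
  define p where "p = act (Perm.swap c0 c) p0'"
  have pQ: "p \<in> Q" unfolding p_def using p0'Q by simp
  have trp: "(p0, Some (Bar c), p) \<in> T"
    using bar_cl[OF tr pQ] abs_swap_Q[OF p0'Q cp0'] unfolding p_def by blast
  have "supp act p \<subseteq> Nn"
  proof
    fix y assume "y \<in> supp act p"
    then obtain z where z: "z \<in> supp act p0'" "y = Perm.apply (Perm.swap c0 c) z"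
      unfolding p_def using p0'Q by (auto simp: supp_perm)
    show "y \<in> Nn"
    proof (cases "z = c0")
      case True then show ?thesis using z cN by simp
    next
      case False
      then have "z \<in> supp act q" using z sp0' by blast
      then have "z \<noteq> c" "z \<in> Nn" using cq V_supp[OF q] by auto
      then show ?thesis using z False by simp
    qed
  qed
  then have pV: "p \<in> V" unfolding V_def using pQ by blast
  have inTR: "(Bar c, p) \<in> TR q" unfolding TR_def using p0 trp pV cN cq by blast
  let ?\<psi> = "g p"
  have fin: "finite (names_form ?\<psi>)" and gd: "\<forall>S w. length w < m \<longrightarrow> (sat S w ?\<psi> \<longleftrightarrow> w \<in> aLang p)"
    using good inTR unfolding Good_def by auto
  obtain b' where b': "b' \<notin> names_bs v \<union> names_bs u \<union> names_form ?\<psi> \<union> supp act p0' \<union> {b, c, c0}"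
    using fresh_ex[of "names_bs v \<union> names_bs u \<union> names_form ?\<psi> \<union> supp act p0' \<union> {b, c, c0}"] fin p0'Q by auto
  obtain c' u' where cu: "Bar c0 # u = Bar c' # u'" and h: "\<forall>d. d \<notin> names_bs v \<union> names_bs u' \<union> {b, c'} \<longrightarrow>
            alpha_eq (perm_bs (Perm.swap b d) v) (perm_bs (Perm.swap c' d) u')"
    using alpha_Bar[OF al] by blast
  have "alpha_eq (perm_bs (Perm.swap b b') v) (perm_bs (Perm.swap c0 b') u)"
    using h cu b' by auto
  then have al2: "alpha_eq (perm_bs (Perm.swap c b') (perm_bs (Perm.swap b b') v))
      (perm_bs (Perm.swap c b') (perm_bs (Perm.swap c0 b') u))" by (rule alpha_perm)
  have "perm_bs (Perm.swap c b') (perm_bs (Perm.swap c0 b') u) \<in> Lang (act (Perm.swap c b') (act (Perm.swap c0 b') p0'))"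
    using Lang_eqvt[OF act_Q[OF p0'Q] Lang_eqvt[OF p0'Q u]] by simp
  moreover have "act (Perm.swap c b') (act (Perm.swap c0 b') p0') = p"
  proof -
    have "act (Perm.swap c b') (act (Perm.swap c0 b') p0') = act (Perm.swap c b' * Perm.swap c0 b') p0'"
      using p0'Q by (simp add: act_times)
    also have "\<dots> = act (Perm.swap c0 c) p0'"
    proof (rule act_agree[OF p0'Q], intro ballI)
      fix x assume x: "x \<in> supp act p0'"
      then have "x \<noteq> b'" using b' by auto
      then show "Perm.apply (Perm.swap c b' * Perm.swap c0 b') x = Perm.apply (Perm.swap c0 c) x"
        using cp0' x b' by (cases "x = c0"; cases "x = c") (auto simp: apply_times)
    qed
    finally show ?thesis unfolding p_def .
  qed
  ultimately have "perm_bs (Perm.swap c b') (perm_bs (Perm.swap b b') v) \<in> aLang p"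
    using al2 Lang_aLang aLang_alpha by metis
  moreover have "length (perm_bs (Perm.swap c b') (perm_bs (Perm.swap b b') v)) < m" using len by simp
  ultimately have "sat S (perm_bs (Perm.swap c b') (perm_bs (Perm.swap b b') v)) ?\<psi>" using gd by blast
  then have st: "sat S (perm_bs (Perm.swap b b') v) (perm_form (Perm.swap c b') ?\<psi>)"
    using sat_eqvt[of S "perm_bs (Perm.swap c b') (perm_bs (Perm.swap b b') v)" ?\<psi> "Perm.swap c b'"] by simp
  have "alpha_eq (Bar b # v) (Bar b' # perm_bs (Perm.swap b b') v)" using b' by (intro alpha_rename) auto
  moreover have "abs_eq perm_form c ?\<psi> b' (perm_form (Perm.swap c b') ?\<psi>)"
    using b' fin by (intro abs_fresh_form) auto
  ultimately have "sat S (Bar b # v) (Dia (Bar c) ?\<psi>)" using st unfolding sat_DiaB_iff by blast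
  then show ?thesis using inTR by blast
qed

end


context ern
begin

lemma Good_mono: "Good (Suc m) \<psi> p \<Longrightarrow> Good m \<psi> p"
  unfolding Good_def by auto

lemma sat_Dia_Nil: "\<not> sat S [] (Dia x \<phi>)"
  by (cases x) (auto simp: sat_DiaP_iff sat_DiaB_iff alpha_Nil_Cons)

lemma sat_DiaP_Bar: "\<not> sat S (Bar b # v) (Dia (Plain a) \<phi>)"
  by (auto simp: sat_DiaP_iff)

lemma sat_DiaB_Plain: "\<not> sat S (Plain a # v) (Dia (Bar c) \<phi>)"
  by (auto simp: sat_DiaB_iff alpha_Plain_Bar)

lemma TR_Plain: "q \<in> V \<Longrightarrow> (Plain a, p) \<in> TR q \<longleftrightarrow> (\<exists>p0\<in>eclos q. (p0, Some (Plain a), p) \<in> T)"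
proof
  assume "(Plain a, p) \<in> TR q" then show "\<exists>p0\<in>eclos q. (p0, Some (Plain a), p) \<in> T" unfolding TR_def by blast
next
  assume q: "q \<in> V" and "\<exists>p0\<in>eclos q. (p0, Some (Plain a), p) \<in> T"
  then obtain p0 where p0: "p0 \<in> eclos q" "(p0, Some (Plain a), p) \<in> T" by blast
  have "supp act p \<subseteq> Nn" using plain_supp(2)[OF p0(2)] eclos_supp[OF p0(1)] V_supp[OF q] by blast
  then have "p \<in> V" unfolding V_def using T_sub[OF p0(2)] by blast
  then show "(Plain a, p) \<in> TR q" unfolding TR_def using p0 by blast
qed

lemma body_sem:
  assumes q: "q \<in> V" and good: "\<forall>(x, p)\<in>TR q. Good m (g p) p" and len: "length w < Suc m"
  shows "sat S w (body q g) \<longleftrightarrow> w \<in> aLang q"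
proof (cases "Topq q")
  case True then show ?thesis using sat_body[OF q] sat_acc aLang_top by auto
next
  case nT: False
  show ?thesis
  proof (cases w)
    case Nil
    then show ?thesis using nT sat_body[OF q] sat_acc sat_Dia_Nil aLang_Nil Lang_Nil
      unfolding Topq_def by auto
  next
    case (Cons y v)
    have lv: "length v < m" using len Cons by simp
    show ?thesis
    proof (cases y)
      case (Plain a)
      have "sat S w (body q g) \<longleftrightarrow> (\<exists>p. (Plain a, p) \<in> TR q \<and> sat S v (g p))"
      proof
        assume "sat S w (body q g)"
        then obtain x p where "(x, p) \<in> TR q" "sat S w (Dia x (g p))"
          using sat_body[OF q] sat_acc nT Cons by auto
        then show "\<exists>p. (Plain a, p) \<in> TR q \<and> sat S v (g p)"
          using Cons Plain by (cases x) (auto simp: sat_DiaP_iff sat_DiaB_Plain)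
      next
        assume "\<exists>p. (Plain a, p) \<in> TR q \<and> sat S v (g p)"
        then obtain p where p: "(Plain a, p) \<in> TR q" "sat S v (g p)" by blast
        then have "sat S w (Dia (Plain a) (g p))" using Cons Plain by (simp add: sat_DiaP_iff)
        then have "\<exists>(x, p)\<in>TR q. sat S w (Dia x (g p))" using p by blast
        then show "sat S w (body q g)" using sat_body[OF q] by blast
      qed
      also have "\<dots> \<longleftrightarrow> (\<exists>p. (Plain a, p) \<in> TR q \<and> v \<in> aLang p)"
        using good lv unfolding Good_def by fastforce
      also have "\<dots> \<longleftrightarrow> w \<in> aLang q"
        using aLang_Plain[of a v q] nT Cons Plain TR_Plain[OF q] by blast
      finally show ?thesis .
    next
      case (Bar b)
      show ?thesis
      proof
        assume "sat S w (body q g)"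
        then obtain x p where xp: "(x, p) \<in> TR q" "sat S w (Dia x (g p))"
          using sat_body[OF q] sat_acc nT Cons by auto
        then obtain c where xc: "x = Bar c" using Cons Bar by (cases x) (auto simp: sat_DiaP_Bar)
        then obtain p0 where "p0 \<in> eclos q" "(p0, Some (Bar c), p) \<in> T" "c \<notin> supp act q"
          using xp(1) unfolding TR_def by blast
        moreover have "Good m (g p) p" using good xp(1) by blast
        ultimately show "w \<in> aLang q" using fwd[OF q] xp(2) xc Cons Bar lv by blast
      next
        assume "w \<in> aLang q"
        then obtain p0 c0 p0' u where "p0 \<in> eclos q" "(p0, Some (Bar c0), p0') \<in> T" "u \<in> Lang p0'"
            "alpha_eq (Bar b # v) (Bar c0 # u)"
          using aLang_Bar_D[of b v q] nT Cons Bar by blast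
        then have "\<exists>(x, p)\<in>TR q. sat S (Bar b # v) (Dia x (g p))"
          using bwd[OF q _ _ _ _ lv good] by blast
        then show "sat S w (body q g)" using sat_body[OF q] Cons Bar by auto
      qed
    qed
  qed
qed

definition okenv :: "(nat \<Rightarrow> form option) \<Rightarrow> 'q list \<Rightarrow> bool" where
  "okenv \<sigma> path \<longleftrightarrow> (\<forall>Y. Y \<notin> ix ` set path \<longrightarrow> \<sigma> Y = None) \<and>
     (\<forall>p\<in>set path. \<exists>\<psi>. \<sigma> (ix p) = Some \<psi> \<and> fv \<psi> = {} \<and> finite (names_form \<psi>))"

lemma CF: assumes q: "q \<in> V" and ok: "okenv \<sigma> path"
  shows "fv (ssubst \<sigma> (F n path q)) = {} \<and> finite (names_form (ssubst \<sigma> (F n path q)))"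
proof -
  have vals: "\<forall>Y t. \<sigma> Y = Some t \<longrightarrow> fv t = {} \<and> finite (names_form t)"
  proof (intro allI impI)
    fix Y t assume "\<sigma> Y = Some t"
    then have "Y \<in> ix ` set path" using ok unfolding okenv_def by force
    then obtain p where "p \<in> set path" "Y = ix p" by blast
    then show "fv t = {} \<and> finite (names_form t)" using ok \<open>\<sigma> Y = Some t\<close> unfolding okenv_def by force
  qed
  have "fv (ssubst \<sigma> (F n path q)) \<subseteq> {Y\<in>fv (F n path q). \<sigma> Y = None}"
    using vals by (intro fv_ssubst) blast
  moreover have "fv (F n path q) \<subseteq> ix ` set path" using F_props[OF q] by blast
  moreover have "\<forall>Y\<in>ix ` set path. \<sigma> Y \<noteq> None" using ok unfolding okenv_def by force
  ultimately have "fv (ssubst \<sigma> (F n path q)) = {}" by blast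
  moreover have "finite (names_form (ssubst \<sigma> (F n path q)))"
    using F_props[OF q] vals by (intro finite_names_ssubst) blast+
  ultimately show ?thesis by blast
qed

lemma G: "\<forall>n path q \<sigma>. q \<in> V \<and> set path \<subseteq> V \<and> distinct (q # path) \<and> card V \<le> n + length path \<and>
   okenv \<sigma> path \<and> (\<forall>p\<in>set path. \<exists>\<psi>. \<sigma> (ix p) = Some \<psi> \<and> Good m \<psi> p)
   \<longrightarrow> Good m (ssubst \<sigma> (F n path q)) q"
proof (induction m)
  case 0
  then show ?case unfolding Good_def using CF by auto
next
  case (Suc m)
  show ?case
  proof (intro allI impI, elim conjE)
    fix n path q \<sigma>
    assume q: "q \<in> V" and path: "set path \<subseteq> V" and dist: "distinct (q # path)"
      and cardV: "card V \<le> n + length path" and ok: "okenv \<sigma> path"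
      and gs: "\<forall>p\<in>set path. \<exists>\<psi>. \<sigma> (ix p) = Some \<psi> \<and> Good (Suc m) \<psi> p"
    have "card (set (q # path)) \<le> card V" using q path finite_V by (intro card_mono) auto
    then have "length path + 1 \<le> card V" using dist by (simp add: distinct_card)
    then obtain n' where n: "n = Suc n'" using cardV by (cases n) auto
    let ?X = "ix q"
    let ?g = "\<lambda>p. if p \<in> set (q # path) then Var (ix p) (supp act p) else F n' (q # path) p"
    have Xnot: "?X \<notin> ix ` set path"
    proof
      assume "?X \<in> ix ` set path"
      then obtain p where "p \<in> set path" "ix p = ix q" by auto
      then have "p = q" using inj_ix q path by (meson inj_onD subsetD)
      then show False using dist \<open>p \<in> set path\<close> by simp
    qed
    then have sX: "\<sigma> ?X = None" using ok unfolding okenv_def by blast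
    have s_upd: "\<sigma>(?X := None) = \<sigma>" using sX by (intro ext) auto
    define \<Phi> where "\<Phi> = ssubst \<sigma> (F n path q)"
    have \<Phi>: "\<Phi> = Mu ?X (body q (\<lambda>p. ssubst \<sigma> (?g p)))"
      unfolding \<Phi>_def n by (simp only: F.simps ssubst.simps s_upd ssubst_body)
    have cf: "fv \<Phi> = {}" "finite (names_form \<Phi>)" using CF[OF q ok] unfolding \<Phi>_def by auto
    have gs_m: "\<forall>p\<in>set path. \<exists>\<psi>. \<sigma> (ix p) = Some \<psi> \<and> Good m \<psi> p" using gs Good_mono by blast
    have G\<Phi>: "Good m \<Phi> q" unfolding \<Phi>_def
      apply (rule Suc.IH[rule_format])
      using q path dist cardV ok gs_m by blast
    define \<sigma>' where "\<sigma>' = \<sigma>(?X \<mapsto> \<Phi>)"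
    have vals: "\<forall>Y t. \<sigma> Y = Some t \<longrightarrow> ?X \<notin> fv t"
    proof (intro allI impI)
      fix Y t assume "\<sigma> Y = Some t"
      then have "Y \<in> ix ` set path" using ok unfolding okenv_def by force
      then obtain p where "p \<in> set path" "Y = ix p" by blast
      then show "?X \<notin> fv t" using ok \<open>\<sigma> Y = Some t\<close> unfolding okenv_def by force
    qed
    have unf: "subst ?X \<Phi> (body q (\<lambda>p. ssubst \<sigma> (?g p))) = body q (\<lambda>p. ssubst \<sigma>' (?g p))"
      unfolding subst_body \<sigma>'_def using subst_ssubst[OF vals sX] by simp
    have ok': "okenv \<sigma>' (q # path)"
      unfolding okenv_def \<sigma>'_def using ok cf Xnot unfolding okenv_def by auto
    have goodsucc: "\<forall>(x, p)\<in>TR q. Good m (ssubst \<sigma>' (?g p)) p"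
    proof (intro ballI, clarify)
      fix x p assume xp: "(x, p) \<in> TR q"
      then have pV: "p \<in> V" by (rule TR_V)
      show "Good m (ssubst \<sigma>' (?g p)) p"
      proof (cases "p \<in> set (q # path)")
        case True
        show ?thesis
        proof (cases "p = q")
          case True then show ?thesis using G\<Phi> by (simp add: \<sigma>'_def)
        next
          case False
          then have "p \<in> set path" using \<open>p \<in> set (q # path)\<close> by simp
          moreover have "ix p \<noteq> ?X" using False inj_ix pV q by (meson inj_onD)
          ultimately show ?thesis using gs_m True by (auto simp: \<sigma>'_def)
        qed
      next
        case False
        have "\<forall>p'\<in>set (q # path). \<exists>\<psi>. \<sigma>' (ix p') = Some \<psi> \<and> Good m \<psi> p'"
        proof
          fix p' assume p': "p' \<in> set (q # path)"
          show "\<exists>\<psi>. \<sigma>' (ix p') = Some \<psi> \<and> Good m \<psi> p'"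
          proof (cases "p' = q")
            case True then show ?thesis using G\<Phi> by (simp add: \<sigma>'_def)
          next
            case False
            then have "p' \<in> set path" using p' by simp
            moreover then have "ix p' \<noteq> ?X" using False inj_ix path q by (meson inj_onD subsetD)
            ultimately show ?thesis using gs_m by (auto simp: \<sigma>'_def)
          qed
        qed
        moreover have "distinct (p # q # path)" using dist False by simp
        moreover have "card V \<le> n' + length (q # path)" using cardV n by simp
        moreover have "set (q # path) \<subseteq> V" using q path by simp
        ultimately have "Good m (ssubst \<sigma>' (F n' (q # path) p)) p"
          apply -
          apply (rule Suc.IH[rule_format])
          using pV ok' by blast
        then show ?thesis using False by simp
      qed
    qed
    have sem: "\<forall>S (w::bletter list). length w < Suc m \<longrightarrow> (sat S w \<Phi> \<longleftrightarrow> w \<in> aLang q)"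
    proof (intro allI impI)
      fix S and w :: "bletter list" assume "length w < Suc m"
      then have "sat S w (body q (\<lambda>p. ssubst \<sigma>' (?g p))) \<longleftrightarrow> w \<in> aLang q"
        using body_sem[OF q goodsucc] by blast
      moreover have "sat S w \<Phi> \<longleftrightarrow> sat S w (body q (\<lambda>p. ssubst \<sigma>' (?g p)))"
        using sat_Mu_iff[of S w ?X "body q (\<lambda>p. ssubst \<sigma> (?g p))"] unf unfolding \<Phi>[symmetric] by simp
      ultimately show "sat S w \<Phi> \<longleftrightarrow> w \<in> aLang q" by blast
    qed
    show "Good (Suc m) (ssubst \<sigma> (F n path q)) q"
      using sem cf unfolding Good_def \<Phi>_def by blast
  qed
qed

end


context ern
begin

lemma FN_F: assumes q: "q \<in> V" shows "FN_form (F (Suc n) path q) = supp act q"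
proof -
  let ?g = "\<lambda>p. if p \<in> set (q # path) then Var (ix p) (supp act p) else F n (q # path) p"
  have h: "\<And>x p. (x, p) \<in> TR q \<Longrightarrow> FN_form (Dia x (?g p)) \<subseteq> supp act q"
  proof -
    fix x p assume xp: "(x, p) \<in> TR q"
    then have pV: "p \<in> V" by (rule TR_V)
    have "FN_form (?g p) \<subseteq> supp act p" using F_props[OF pV] by auto
    then show "FN_form (Dia x (?g p)) \<subseteq> supp act q" by (rule TR_supp[OF q xp])
  qed
  have "FN_form (F (Suc n) path q) = FN_form (body q ?g)" by simp
  also have "\<dots> = supp act q" using FN_body[OF q, of ?g] h by blast
  finally show ?thesis .
qed

lemma wa_F: "q \<in> V \<Longrightarrow> set path \<subseteq> V \<Longrightarrow> (\<forall>p\<in>set path. \<Gamma> (ix p) = Some (supp act p)) \<Longrightarrow>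
   well_annotated \<Gamma> (F n path q)"
proof (induction n arbitrary: path q \<Gamma>)
  case 0 then show ?case by (simp add: FalseF_def)
next
  case (Suc n)
  let ?g = "\<lambda>p. if p \<in> set (q # path) then Var (ix p) (supp act p) else F n (q # path) p"
  let ?\<Gamma> = "\<Gamma>(ix q \<mapsto> supp act q)"
  have env: "\<forall>p\<in>set (q # path). ?\<Gamma> (ix p) = Some (supp act p)"
  proof
    fix p assume p: "p \<in> set (q # path)"
    show "?\<Gamma> (ix p) = Some (supp act p)"
    proof (cases "ix p = ix q")
      case True
      then have "p = q" using inj_ix p Suc.prems(1,2) by (metis inj_onD set_ConsD subsetD)
      then show ?thesis by simp
    next
      case False
      then have "p \<noteq> q" by auto
      then have "p \<in> set path" using p by simp
      then have "\<Gamma> (ix p) = Some (supp act p)" using Suc.prems(3) by blast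
      then show ?thesis using False by simp
    qed
  qed
  have "\<forall>(x, p)\<in>TR q. well_annotated ?\<Gamma> (?g p)"
  proof (intro ballI, clarify)
    fix x p assume xp: "(x, p) \<in> TR q"
    then have pV: "p \<in> V" by (rule TR_V)
    show "well_annotated ?\<Gamma> (?g p)"
    proof (cases "p \<in> set (q # path)")
      case True
      then have "?\<Gamma> (ix p) = Some (supp act p)" using env by blast
      then show ?thesis by (simp only: True if_True well_annotated.simps)
    next
      case False
      have "well_annotated ?\<Gamma> (F n (q # path) p)"
        by (rule Suc.IH[OF pV _ env]) (use Suc.prems(1,2) in simp)
      then show ?thesis by (simp only: False if_False)
    qed
  qed
  then have "well_annotated ?\<Gamma> (body q ?g)" using wa_body[OF Suc.prems(1)] by blast
  moreover have "FN_form (F (Suc n) path q) = supp act q" by (rule FN_F[OF Suc.prems(1)])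
  ultimately show ?case by simp
qed

lemma s_V: "s \<in> V" unfolding V_def using s_Q supp_s by simp

definition \<Phi>0 :: form where "\<Phi>0 = F (card V) [] s"

lemma \<Phi>0_bar: "bar_formula \<Phi>0"
  unfolding bar_formula_def \<Phi>0_def using F_props[OF s_V] wa_F[OF s_V, of "[]" Map.empty] by simp

lemma \<Phi>0_FN: "FN_form \<Phi>0 = {}"
  unfolding \<Phi>0_def using F_props[OF s_V, of "card V" "[]"] supp_s by simp

lemma \<Phi>0_sem: "sat S w \<Phi>0 \<longleftrightarrow> w \<in> aLang s"
proof -
  have ok: "okenv Map.empty []" unfolding okenv_def by simp
  have "Good (Suc (length w)) (ssubst Map.empty (F (card V) [] s)) s"
    using G[of "Suc (length w)"] s_V ok by simp
  moreover have "ssubst Map.empty (F (card V) [] s) = \<Phi>0" unfolding \<Phi>0_def by (simp add: ssubst_id)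
  ultimately show ?thesis unfolding Good_def by simp
qed

lemma Lpre_iff: "(w, x) \<in> L_pre T s f \<longleftrightarrow> (\<exists>q. steps T s w q \<and> f q = x \<and> x \<in> {F1, FTop})"
  unfolding L_pre_def by blast

lemma L0_eq: "L_0 T s f = closed_strings {} \<inter> Lang s"
  unfolding L_0_def Lang_def Lpre_iff by blast

lemma class_eq: "alpha_eq x y \<Longrightarrow> alpha_rel `` {x} = alpha_rel `` {y}"
  unfolding alpha_rel_def by (auto intro: alpha_trans alpha_sym)

lemma main: "sem \<Phi>0 = L_alpha T s f"
proof -
  have A: "{w \<in> closed_strings {}. sat {} w \<Phi>0} = closed_strings {} \<inter> aLang s"
    using \<Phi>0_sem by auto
  show ?thesis unfolding sem_def L_alpha_def L0_eq A
  proof (rule set_eqI, rule iffI)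
    fix C assume "C \<in> (closed_strings {} \<inter> aLang s) // alpha_rel"
    then obtain x where x: "x \<in> closed_strings {}" "x \<in> aLang s" "C = alpha_rel `` {x}"
      unfolding quotient_def by blast
    then obtain x' where x': "alpha_eq x x'" "x' \<in> Lang s" unfolding aLang_def by blast
    have "x' \<in> closed_strings {}" using x(1) alpha_FN[OF x'(1)] unfolding closed_strings_def by simp
    then show "C \<in> (closed_strings {} \<inter> Lang s) // alpha_rel"
      using x' x(3) class_eq[OF x'(1)] unfolding quotient_def by blast
  next
    fix C assume "C \<in> (closed_strings {} \<inter> Lang s) // alpha_rel"
    then show "C \<in> (closed_strings {} \<inter> aLang s) // alpha_rel"
      using Lang_aLang unfolding quotient_def by blast
  qed
qed

end

theorem theorem6p6:
  fixes act :: "name perm \<Rightarrow> 'q \<Rightarrow> 'q"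
    and Q :: "'q set" and T :: "('q \<times> bletter option \<times> 'q) set" and s :: 'q and f :: "'q \<Rightarrow> fval"
  assumes "ERNNA act Q T s f"
  shows "\<exists>\<phi>. bar_formula \<phi> \<and> FN_form \<phi> = {} \<and> sem \<phi> = L_alpha T s f"
proof -
  interpret ern act Q T s f by (rule ern.intro) (rule assms)
  show ?thesis using \<Phi>0_bar \<Phi>0_FN main by blast
qed


end
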